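(* Let $M$ be a matroid on $E=[n]$, $t,u$ positive integers, $\mathcal F$ the regular mixed subdivision defined below. For an ordered partition $(X,Y)$ of $[n]\setminus\{1\}$ let $T_{(X,Y)}=\mathbf e_{B}+u\Delta_{\{1\}\cup X}+t\nabla_{\{1\}\cup Y}$ be the top-degree face of $\mathcal F$ indexed by it ($B$ the unique basis making this a top-degree face). Let $(X_1,Y_1)\ne(X_2,Y_2)$ be two such partitions whose top-degree faces $T_1,T_2$ contain a common point $p$, and let $(X_3,Y_3)$ be a partition of $[n]\setminus\{1\}$ with $X_1\cap X_2\subseteq X_3$ and $Y_1\cap Y_2\subseteq Y_3$. Then $p\in T_3=T_{(X_3,Y_3)}$, and the bases of $T_1,T_2,T_3$ all coincide.
   Context: $M$ is a matroid on $E=[n]=\{1,\dots,n\}$. $P(M)\subseteq\mathbb R^E$ is the convex hull of the indicator vectors $\mathbf e_B$ of bases $B$. For nonempty $S\subseteq E$, $\Delta_S=\operatorname{conv}\{\mathbf e_i:i\in S\}$, $\nabla_S=-\Delta_S$, $\Delta=\Delta_E$, $\nabla=\nabla_E$. The subdivision: fix reals $0<\alpha_1<\dots<\alpha_n$, $0<\beta_1<\dots<\beta_n$; let $\mathit{Lift}=\operatorname{conv}\{(u\mathbf e_i,\alpha_i)\}+(P(M)\times\{0\})+\operatorname{conv}\{(-t\mathbf e_i,\beta_i)\}\subseteq\mathbb R^E\times\mathbb R$. The lower faces of $\mathit{Lift}$ are the faces on which some linear functional with last coordinate $-1$ attains its maximum; their projections to $\mathbb R^E$ form the regular mixed subdivision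 $\mathcal F$ of $u\Delta+P(M)+t\nabla$. Each cell is canonically written $F+G+H$ (projections of the faces of the three summands of $\mathit{Lift}$ maximizing the same functional), with $F$ a face of $u\Delta$, $G$ a face of $P(M)$, $H$ a face of $t\nabla$. A top-degree face is a maximal cell $F+G+H$ of $\mathcal F$ with $G$ a vertex of $P(M)$. For each $X,Y$ with $X\cup Y=E$, $X\cap Y=\{1\}$ there is a unique basis $B$ such that $u\Delta_X+\mathbf e_B+t\nabla_Y$ is a top-degree face. *)

theory Defs
  imports Main "HOL-Analysis.Analysis"
begin

text \<open>Points of R^E, E = {1..n}, are functions nat => real (only coordinates 1..n matter;
  all points below vanish outside {1..n}).  Points of R^E x R are pairs.\<close>

definition matroid_bases :: "nat \<Rightarrow> nat set set \<Rightarrow> bool" where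
  "matroid_bases n Bs \<longleftrightarrow> Bs \<noteq> {} \<and> (\<forall>B\<in>Bs. B \<subseteq> {1..n}) \<and>
     (\<forall>B1\<in>Bs. \<forall>B2\<in>Bs. \<forall>x\<in>B1 - B2. \<exists>y\<in>B2 - B1. insert y (B1 - {x}) \<in> Bs)"

definition cvx :: "(nat \<Rightarrow> real) set \<Rightarrow> (nat \<Rightarrow> real) set" where
  "cvx V = {x. \<exists>w. (\<forall>v\<in>V. 0 \<le> w v) \<and> (\<Sum>v\<in>V. w v) = 1 \<and> x = (\<lambda>i. \<Sum>v\<in>V. w v * v i)}"

definition cvxL :: "((nat \<Rightarrow> real) \<times> real) set \<Rightarrow> ((nat \<Rightarrow> real) \<times> real) set" where
  "cvxL V = {x. \<exists>w. (\<forall>v\<in>V. 0 \<le> w v) \<and> (\<Sum>v\<in>V. w v) = 1 \<and>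
                 x = ((\<lambda>i. \<Sum>v\<in>V. w v * fst v i), (\<Sum>v\<in>V. w v * snd v))}"

definition msum :: "(nat \<Rightarrow> real) set \<Rightarrow> (nat \<Rightarrow> real) set \<Rightarrow> (nat \<Rightarrow> real) set" where
  "msum S T = {(\<lambda>i. x i + y i) | x y. x \<in> S \<and> y \<in> T}"

definition msumL :: "((nat \<Rightarrow> real) \<times> real) set \<Rightarrow> ((nat \<Rightarrow> real) \<times> real) set
    \<Rightarrow> ((nat \<Rightarrow> real) \<times> real) set" where
  "msumL S T = {((\<lambda>i. fst x i + fst y i), snd x + snd y) | x y. x \<in> S \<and> y \<in> T}"

definition sev :: "real \<Rightarrow> nat \<Rightarrow> (nat \<Rightarrow> real)" where
  "sev c i = (\<lambda>j. if j = i then c else 0)"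

definition indvec :: "nat set \<Rightarrow> (nat \<Rightarrow> real)" where
  "indvec B = (\<lambda>j. if j \<in> B then 1 else 0)"

text \<open>c * Delta_S = conv { c e_i : i in S };  so u Delta_S = sdelta u S and t Nabla_S = sdelta (-t) S.\<close>
definition sdelta :: "real \<Rightarrow> nat set \<Rightarrow> (nat \<Rightarrow> real) set" where
  "sdelta c S = cvx (sev c ` S)"

definition matroid_polytope :: "nat set set \<Rightarrow> (nat \<Rightarrow> real) set" where
  "matroid_polytope Bs = cvx (indvec ` Bs)"

definition liftA :: "nat \<Rightarrow> (nat \<Rightarrow> real) \<Rightarrow> nat \<Rightarrow> ((nat \<Rightarrow> real) \<times> real) set" where
  "liftA n \<alpha> u = cvxL ((\<lambda>i. (sev (real u) i, \<alpha> i)) ` {1..n})"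

definition liftP :: "nat set set \<Rightarrow> ((nat \<Rightarrow> real) \<times> real) set" where
  "liftP Bs = (\<lambda>x. (x, 0)) ` matroid_polytope Bs"

definition liftC :: "nat \<Rightarrow> (nat \<Rightarrow> real) \<Rightarrow> nat \<Rightarrow> ((nat \<Rightarrow> real) \<times> real) set" where
  "liftC n \<beta> t = cvxL ((\<lambda>i. (sev (- real t) i, \<beta> i)) ` {1..n})"

definition Lift :: "nat \<Rightarrow> nat set set \<Rightarrow> (nat \<Rightarrow> real) \<Rightarrow> (nat \<Rightarrow> real) \<Rightarrow> nat \<Rightarrow> nat
    \<Rightarrow> ((nat \<Rightarrow> real) \<times> real) set" where
  "Lift n Bs \<alpha> \<beta> u t = msumL (liftA n \<alpha> u) (msumL (liftP Bs) (liftC n \<beta> t))"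

definition lfun :: "nat \<Rightarrow> (nat \<Rightarrow> real) \<Rightarrow> (nat \<Rightarrow> real) \<times> real \<Rightarrow> real" where
  "lfun n c z = (\<Sum>i\<in>{1..n}. c i * fst z i) - snd z"

definition maxface :: "nat \<Rightarrow> (nat \<Rightarrow> real) \<Rightarrow> ((nat \<Rightarrow> real) \<times> real) set
    \<Rightarrow> ((nat \<Rightarrow> real) \<times> real) set" where
  "maxface n c S = {z \<in> S. \<forall>w\<in>S. lfun n c w \<le> lfun n c z}"

text \<open>The cell of the regular mixed subdivision F given by the lower face for c,
  and its canonical summands F_c + G_c + H_c.\<close>
definition cell :: "nat \<Rightarrow> nat set set \<Rightarrow> (nat \<Rightarrow> real) \<Rightarrow> (nat \<Rightarrow> real) \<Rightarrow> nat \<Rightarrow> nat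
    \<Rightarrow> (nat \<Rightarrow> real) \<Rightarrow> (nat \<Rightarrow> real) set" where
  "cell n Bs \<alpha> \<beta> u t c = fst ` maxface n c (Lift n Bs \<alpha> \<beta> u t)"

definition cellF :: "nat \<Rightarrow> (nat \<Rightarrow> real) \<Rightarrow> nat \<Rightarrow> (nat \<Rightarrow> real) \<Rightarrow> (nat \<Rightarrow> real) set" where
  "cellF n \<alpha> u c = fst ` maxface n c (liftA n \<alpha> u)"

definition cellG :: "nat \<Rightarrow> nat set set \<Rightarrow> (nat \<Rightarrow> real) \<Rightarrow> (nat \<Rightarrow> real) set" where
  "cellG n Bs c = fst ` maxface n c (liftP Bs)"

definition cellH :: "nat \<Rightarrow> (nat \<Rightarrow> real) \<Rightarrow> nat \<Rightarrow> (nat \<Rightarrow> real) \<Rightarrow> (nat \<Rightarrow> real) set" where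
  "cellH n \<beta> t c = fst ` maxface n c (liftC n \<beta> t)"

text \<open>F + G + H is a top-degree face: it is a maximal cell of the subdivision, canonically
  written F + G + H, with G a vertex of P(M).\<close>
definition top_degree_face :: "nat \<Rightarrow> nat set set \<Rightarrow> (nat \<Rightarrow> real) \<Rightarrow> (nat \<Rightarrow> real) \<Rightarrow> nat \<Rightarrow> nat
    \<Rightarrow> (nat \<Rightarrow> real) set \<Rightarrow> (nat \<Rightarrow> real) set \<Rightarrow> (nat \<Rightarrow> real) set \<Rightarrow> bool" where
  "top_degree_face n Bs \<alpha> \<beta> u t F G H \<longleftrightarrow>
     (\<exists>c. F = cellF n \<alpha> u c \<and> G = cellG n Bs c \<and> H = cellH n \<beta> t c \<and>
          (\<forall>c'. cell n Bs \<alpha> \<beta> u t c \<subseteq> cell n Bs \<alpha> \<beta> u t c' \<longrightarrow>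
                 cell n Bs \<alpha> \<beta> u t c' = cell n Bs \<alpha> \<beta> u t c) \<and>
          (\<exists>v \<in> matroid_polytope Bs. G = {v}))"

definition Tface :: "nat \<Rightarrow> nat \<Rightarrow> nat set \<Rightarrow> nat set \<Rightarrow> nat set \<Rightarrow> (nat \<Rightarrow> real) set" where
  "Tface u t X Y B = msum {indvec B} (msum (sdelta (real u) (insert 1 X)) (sdelta (- real t) (insert 1 Y)))"

definition is_T :: "nat \<Rightarrow> nat set set \<Rightarrow> (nat \<Rightarrow> real) \<Rightarrow> (nat \<Rightarrow> real) \<Rightarrow> nat \<Rightarrow> nat
    \<Rightarrow> nat set \<Rightarrow> nat set \<Rightarrow> nat set \<Rightarrow> bool" where
  "is_T n Bs \<alpha> \<beta> u t X Y B \<longleftrightarrow> B \<in> Bs \<and>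
     top_degree_face n Bs \<alpha> \<beta> u t (sdelta (real u) (insert 1 X)) {indvec B} (sdelta (- real t) (insert 1 Y))"

end

theory Submission
  imports Defs
begin

lemma cvxL_inj:
  assumes "finite I" "inj_on f I"
  shows "cvxL (f ` I) = {((\<lambda>j. \<Sum>i\<in>I. w i * fst (f i) j), (\<Sum>i\<in>I. w i * snd (f i))) | w.
            (\<forall>i\<in>I. 0 \<le> w i) \<and> sum w I = 1}"
proof (intro set_eqI iffI)
  fix x assume "x \<in> cvxL (f ` I)"
  then obtain w where w: "\<forall>v\<in>f ` I. 0 \<le> w v" "(\<Sum>v\<in>f ` I. w v) = 1"
    "x = ((\<lambda>i. \<Sum>v\<in>f ` I. w v * fst v i), (\<Sum>v\<in>f ` I. w v * snd v))"
    unfolding cvxL_def by blast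
  have e1: "(\<Sum>v\<in>f ` I. w v) = (\<Sum>i\<in>I. w (f i))" using sum.reindex[OF assms(2)] by simp
  have e2: "\<And>j. (\<Sum>v\<in>f ` I. w v * fst v j) = (\<Sum>i\<in>I. w (f i) * fst (f i) j)"
    using sum.reindex[OF assms(2)] by simp
  have e3: "(\<Sum>v\<in>f ` I. w v * snd v) = (\<Sum>i\<in>I. w (f i) * snd (f i))"
    using sum.reindex[OF assms(2)] by simp
  show "x \<in> {((\<lambda>j. \<Sum>i\<in>I. w i * fst (f i) j), (\<Sum>i\<in>I. w i * snd (f i))) | w.
            (\<forall>i\<in>I. 0 \<le> w i) \<and> sum w I = 1}"
    using w e1 e2 e3 by (intro CollectI exI[of _ "\<lambda>i. w (f i)"]) auto
next
  fix x assume "x \<in> {((\<lambda>j. \<Sum>i\<in>I. w i * fst (f i) j), (\<Sum>i\<in>I. w i * snd (f i))) | w.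
            (\<forall>i\<in>I. 0 \<le> w i) \<and> sum w I = 1}"
  then obtain w where w: "\<forall>i\<in>I. 0 \<le> w i" "sum w I = 1"
    "x = ((\<lambda>j. \<Sum>i\<in>I. w i * fst (f i) j), (\<Sum>i\<in>I. w i * snd (f i)))" by blast
  define w' where "w' = (\<lambda>v. w (the_inv_into I f v))"
  have ww: "\<And>i. i \<in> I \<Longrightarrow> w' (f i) = w i"
    unfolding w'_def using the_inv_into_f_f[OF assms(2)] by simp
  have e1: "(\<Sum>v\<in>f ` I. w' v) = (\<Sum>i\<in>I. w i)" by (simp add: sum.reindex[OF assms(2)] ww)
  have e2: "\<And>j. (\<Sum>v\<in>f ` I. w' v * fst v j) = (\<Sum>i\<in>I. w i * fst (f i) j)"
    by (simp add: sum.reindex[OF assms(2)] ww)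
  have e3: "(\<Sum>v\<in>f ` I. w' v * snd v) = (\<Sum>i\<in>I. w i * snd (f i))"
    by (simp add: sum.reindex[OF assms(2)] ww)
  show "x \<in> cvxL (f ` I)" unfolding cvxL_def
    using w e1 e2 e3 ww by (intro CollectI exI[of _ w']) auto
qed

lemma cvx_inj:
  assumes "finite I" "inj_on f I"
  shows "cvx (f ` I) = {(\<lambda>j. \<Sum>i\<in>I. w i * f i j) | w.
            (\<forall>i\<in>I. 0 \<le> w i) \<and> sum w I = 1}"
proof (intro set_eqI iffI)
  fix x assume "x \<in> cvx (f ` I)"
  then obtain w where w: "\<forall>v\<in>f ` I. 0 \<le> w v" "(\<Sum>v\<in>f ` I. w v) = 1"
    "x = (\<lambda>i. \<Sum>v\<in>f ` I. w v * v i)"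
    unfolding cvx_def by blast
  have e1: "(\<Sum>v\<in>f ` I. w v) = (\<Sum>i\<in>I. w (f i))" using sum.reindex[OF assms(2)] by simp
  have e2: "\<And>j. (\<Sum>v\<in>f ` I. w v * v j) = (\<Sum>i\<in>I. w (f i) * f i j)"
    using sum.reindex[OF assms(2)] by simp
  show "x \<in> {(\<lambda>j. \<Sum>i\<in>I. w i * f i j) | w. (\<forall>i\<in>I. 0 \<le> w i) \<and> sum w I = 1}"
    using w e1 e2 by (intro CollectI exI[of _ "\<lambda>i. w (f i)"]) auto
next
  fix x assume "x \<in> {(\<lambda>j. \<Sum>i\<in>I. w i * f i j) | w. (\<forall>i\<in>I. 0 \<le> w i) \<and> sum w I = 1}"
  then obtain w where w: "\<forall>i\<in>I. 0 \<le> w i" "sum w I = 1"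
    "x = (\<lambda>j. \<Sum>i\<in>I. w i * f i j)" by blast
  define w' where "w' = (\<lambda>v. w (the_inv_into I f v))"
  have ww: "\<And>i. i \<in> I \<Longrightarrow> w' (f i) = w i"
    unfolding w'_def using the_inv_into_f_f[OF assms(2)] by simp
  have e1: "(\<Sum>v\<in>f ` I. w' v) = (\<Sum>i\<in>I. w i)" by (simp add: sum.reindex[OF assms(2)] ww)
  have e2: "\<And>j. (\<Sum>v\<in>f ` I. w' v * v j) = (\<Sum>i\<in>I. w i * f i j)"
    by (simp add: sum.reindex[OF assms(2)] ww)
  show "x \<in> cvx (f ` I)" unfolding cvx_def
    using w e1 e2 ww by (intro CollectI exI[of _ w']) auto
qed

lemma sum_delta_mult: "finite V \<Longrightarrow> v \<in> V \<Longrightarrow> (\<Sum>x\<in>V. (if x = v then 1 else (0::real)) * h x) = h v"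
proof -
  assume a: "finite V" "v \<in> V"
  have "(\<Sum>x\<in>V. (if x = v then 1 else (0::real)) * h x) = (\<Sum>x\<in>V. if x = v then h x else 0)"
    by (rule sum.cong) auto
  also have "\<dots> = h v" using a by simp
  finally show ?thesis .
qed

lemma vertex_cvxL: "finite V \<Longrightarrow> v \<in> V \<Longrightarrow> v \<in> cvxL V"
  unfolding cvxL_def
  by (rule CollectI, rule exI[of _ "\<lambda>x. if x = v then 1 else 0"]) (simp add: sum_delta_mult)

lemma vertex_cvx: "finite V \<Longrightarrow> v \<in> V \<Longrightarrow> v \<in> cvx V"
  unfolding cvx_def
  by (rule CollectI, rule exI[of _ "\<lambda>x. if x = v then 1 else 0"]) (simp add: sum_delta_mult)

lemma max_lemma:
  fixes g w :: "'a \<Rightarrow> real"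
  assumes "finite I" "\<forall>i\<in>I. g i \<le> M" "\<forall>i\<in>I. 0 \<le> w i" "sum w I = 1"
  shows "(\<Sum>i\<in>I. w i * g i) \<le> M \<and> ((\<Sum>i\<in>I. w i * g i) = M \<longleftrightarrow> (\<forall>i\<in>I. w i \<noteq> 0 \<longrightarrow> g i = M))"
proof -
  have "(\<Sum>i\<in>I. w i * (M - g i)) = (\<Sum>i\<in>I. M * w i - w i * g i)"
    by (rule sum.cong) (auto simp: right_diff_distrib)
  also have "\<dots> = M * sum w I - (\<Sum>i\<in>I. w i * g i)"
    by (simp only: sum_subtractf sum_distrib_left)
  finally have eq: "(\<Sum>i\<in>I. w i * (M - g i)) = M - (\<Sum>i\<in>I. w i * g i)" using assms(4) by simp
  have nn: "\<forall>i\<in>I. 0 \<le> w i * (M - g i)" using assms(2,3) by simp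
  have z: "0 \<le> (\<Sum>i\<in>I. w i * (M - g i))" using nn by (simp add: sum_nonneg)
  have q: "(\<Sum>i\<in>I. w i * (M - g i)) = 0 \<longleftrightarrow> (\<forall>i\<in>I. w i * (M - g i) = 0)"
    using nn by (intro sum_nonneg_eq_0_iff[OF assms(1)]) auto
  have r: "(\<forall>i\<in>I. w i * (M - g i) = 0) \<longleftrightarrow> (\<forall>i\<in>I. w i \<noteq> 0 \<longrightarrow> g i = M)"
    by auto
  show ?thesis
  proof
    show "(\<Sum>i\<in>I. w i * g i) \<le> M" using z eq by linarith
    show "((\<Sum>i\<in>I. w i * g i) = M \<longleftrightarrow> (\<forall>i\<in>I. w i \<noteq> 0 \<longrightarrow> g i = M))"
      using q r eq by linarith
  qed
qed

definition vS :: "nat \<Rightarrow> real \<Rightarrow> (nat \<Rightarrow> real) \<Rightarrow> (nat \<Rightarrow> real)" where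
  "vS n s w = (\<lambda>j. if j \<in> {1..n} then s * w j else 0)"

definition prob :: "nat \<Rightarrow> nat set \<Rightarrow> (nat \<Rightarrow> real) \<Rightarrow> bool" where
  "prob n S w \<longleftrightarrow> (\<forall>i\<in>{1..n}. 0 \<le> w i) \<and> (\<forall>i\<in>{1..n}. i \<notin> S \<longrightarrow> w i = 0) \<and> sum w {1..n} = 1"

definition dot :: "nat \<Rightarrow> (nat \<Rightarrow> real) \<Rightarrow> (nat \<Rightarrow> real) \<Rightarrow> real" where
  "dot n c x = (\<Sum>i\<in>{1..n}. c i * x i)"

definition SX :: "nat \<Rightarrow> (nat \<Rightarrow> real) \<Rightarrow> real \<Rightarrow> (nat \<Rightarrow> real) \<Rightarrow> nat set" where
  "SX n \<gamma> s c = {i\<in>{1..n}. \<forall>k\<in>{1..n}. s * c k - \<gamma> k \<le> s * c i - \<gamma> i}"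

definition dl :: "nat \<Rightarrow> nat \<Rightarrow> real" where
  "dl i = (\<lambda>k. if k = i then 1 else 0)"

lemma lfun_dot: "lfun n c z = dot n c (fst z) - snd z"
  unfolding lfun_def dot_def by simp

lemma sev_sum: "finite I \<Longrightarrow> (\<Sum>i\<in>I. w i * sev s i j) = (if j \<in> I then s * w j else 0)"
proof -
  assume f: "finite I"
  have "(\<Sum>i\<in>I. w i * sev s i j) = (\<Sum>i\<in>I. if i = j then s * w j else 0)"
    by (rule sum.cong) (auto simp: sev_def)
  then show ?thesis using f by simp
qed

lemma inj_sevp: "s \<noteq> 0 \<Longrightarrow> inj_on (\<lambda>i. (sev s i, \<gamma> i)) I"
proof (rule inj_onI)
  fix i k assume s: "s \<noteq> 0" and "(sev s i, \<gamma> i) = (sev s k, \<gamma> k)"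
  then have "sev s i i = sev s k i" by simp
  then show "i = k" using s unfolding sev_def by (auto split: if_splits)
qed

lemma inj_sev: "s \<noteq> 0 \<Longrightarrow> inj_on (sev s) I"
proof (rule inj_onI)
  fix i k assume s: "s \<noteq> 0" and "sev s i = sev s k"
  then have "sev s i i = sev s k i" by simp
  then show "i = k" using s unfolding sev_def by (auto split: if_splits)
qed

lemma prob_full: "prob n {1..n} w \<longleftrightarrow> (\<forall>i\<in>{1..n}. 0 \<le> w i) \<and> sum w {1..n} = 1"
  unfolding prob_def by auto

lemma liftX_rep:
  assumes "s \<noteq> 0"
  shows "cvxL ((\<lambda>i. (sev s i, \<gamma> i)) ` {1..n}) =
     {(vS n s w, \<Sum>i\<in>{1..n}. w i * \<gamma> i) | w. prob n {1..n} w}"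
proof -
  have "cvxL ((\<lambda>i. (sev s i, \<gamma> i)) ` {1..n}) =
     {((\<lambda>j. \<Sum>i\<in>{1..n}. w i * fst (sev s i, \<gamma> i) j), (\<Sum>i\<in>{1..n}. w i * snd (sev s i, \<gamma> i))) | w.
            (\<forall>i\<in>{1..n}. 0 \<le> w i) \<and> sum w {1..n} = 1}"
    by (rule cvxL_inj) (auto simp: inj_sevp assms)
  also have "\<dots> = {(vS n s w, \<Sum>i\<in>{1..n}. w i * \<gamma> i) | w. prob n {1..n} w}"
    unfolding prob_full by (simp add: sev_sum vS_def[abs_def])
  finally show ?thesis .
qed

lemma sum_supp:
  assumes "S \<subseteq> {1..n}" "\<forall>i\<in>{1..n}. i \<notin> S \<longrightarrow> g i = 0"
  shows "sum g S = sum g {1..(n::nat)}"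
  by (rule sum.mono_neutral_left) (use assms in auto)

lemma sdelta_rep:
  assumes "s \<noteq> 0" "S \<subseteq> {1..n}"
  shows "sdelta s S = {vS n s w | w. prob n S w}"
proof -
  have fS: "finite S" using assms(2) finite_subset by blast
  have "sdelta s S = {(\<lambda>j. \<Sum>i\<in>S. w i * sev s i j) | w. (\<forall>i\<in>S. 0 \<le> w i) \<and> sum w S = 1}"
    unfolding sdelta_def by (rule cvx_inj[OF fS inj_sev[OF assms(1)]])
  also have "\<dots> = {(\<lambda>j. if j \<in> S then s * w j else 0) | w. (\<forall>i\<in>S. 0 \<le> w i) \<and> sum w S = 1}"
    using fS by (simp add: sev_sum)
  also have "\<dots> = {vS n s w | w. prob n S w}"
  proof (intro set_eqI iffI)
    fix x assume "x \<in> {(\<lambda>j. if j \<in> S then s * w j else 0) | w. (\<forall>i\<in>S. 0 \<le> w i) \<and> sum w S = 1}"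
    then obtain w where w: "\<forall>i\<in>S. 0 \<le> w i" "sum w S = 1" "x = (\<lambda>j. if j \<in> S then s * w j else 0)"
      by blast
    define w' where "w' = (\<lambda>i. if i \<in> S then w i else 0)"
    have "sum w' S = sum w' {1..n}" by (rule sum_supp) (use assms(2) in \<open>auto simp: w'_def\<close>)
    moreover have "sum w' S = sum w S" by (rule sum.cong) (auto simp: w'_def)
    ultimately have "prob n S w'" unfolding prob_def using w by (auto simp: w'_def)
    moreover have "x = vS n s w'" unfolding w(3) vS_def w'_def using assms(2) by (intro ext) auto
    ultimately show "x \<in> {vS n s w | w. prob n S w}" by blast
  next
    fix x assume "x \<in> {vS n s w | w. prob n S w}"
    then obtain w where w: "prob n S w" "x = vS n s w" by blast
    have "sum w S = sum w {1..n}" by (rule sum_supp) (use assms(2) w in \<open>auto simp: prob_def\<close>)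
    then have "(\<forall>i\<in>S. 0 \<le> w i) \<and> sum w S = 1" using w assms(2) by (auto simp: prob_def)
    moreover have "x = (\<lambda>j. if j \<in> S then s * w j else 0)"
      unfolding w(2) vS_def using w(1) assms(2) unfolding prob_def by (intro ext) auto
    ultimately show "x \<in> {(\<lambda>j. if j \<in> S then s * w j else 0) | w. (\<forall>i\<in>S. 0 \<le> w i) \<and> sum w S = 1}"
      by blast
  qed
  finally show ?thesis .
qed

lemma prob_dl: "i \<in> S \<Longrightarrow> S \<subseteq> {1..n} \<Longrightarrow> prob n S (dl i)"
  unfolding prob_def dl_def by auto

lemma sdelta_mem:
  assumes "s \<noteq> 0" "S \<subseteq> {1..n}" "i \<in> {1..n}"
  shows "vS n s (dl i) \<in> sdelta s S \<longleftrightarrow> i \<in> S"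
proof
  assume "vS n s (dl i) \<in> sdelta s S"
  then obtain w where w: "prob n S w" "vS n s (dl i) = vS n s w" using sdelta_rep[OF assms(1,2)] by blast
  then have "vS n s (dl i) i = vS n s w i" by simp
  then have "w i = 1" using assms by (simp add: vS_def dl_def)
  then show "i \<in> S" using w(1) assms(3) unfolding prob_def by auto
next
  assume "i \<in> S" then show "vS n s (dl i) \<in> sdelta s S"
    using sdelta_rep[OF assms(1,2)] prob_dl[OF _ assms(2)] by blast
qed

lemma sdelta_inj:
  assumes "s \<noteq> 0" "S \<subseteq> {1..n}" "S' \<subseteq> {1..n}" "sdelta s S = sdelta s S'"
  shows "S = S'"
proof (intro set_eqI)
  fix i show "i \<in> S \<longleftrightarrow> i \<in> S'"
  proof (cases "i \<in> {1..n}")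
    case True then show ?thesis using sdelta_mem[OF assms(1,2) True] sdelta_mem[OF assms(1,3) True] assms(4) by simp
  next
    case False then show ?thesis using assms(2,3) by auto
  qed
qed

lemma dot_vS: "dot n c (vS n s w) = s * (\<Sum>i\<in>{1..n}. c i * w i)"
proof -
  have "dot n c (vS n s w) = (\<Sum>i\<in>{1..n}. s * (c i * w i))"
    unfolding dot_def vS_def by (rule sum.cong) auto
  then show ?thesis by (simp add: sum_distrib_left)
qed

lemma lfun_liftX:
  "lfun n c (vS n s w, \<Sum>i\<in>{1..n}. w i * \<gamma> i) = (\<Sum>i\<in>{1..n}. w i * (s * c i - \<gamma> i))"
proof -
  have "(\<Sum>i\<in>{1..n}. w i * (s * c i - \<gamma> i)) = (\<Sum>i\<in>{1..n}. s * (c i * w i) - w i * \<gamma> i)"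
    by (rule sum.cong) (auto simp: algebra_simps)
  also have "\<dots> = s * (\<Sum>i\<in>{1..n}. c i * w i) - (\<Sum>i\<in>{1..n}. w i * \<gamma> i)"
    by (simp only: sum_subtractf sum_distrib_left)
  finally show ?thesis by (simp add: lfun_dot dot_vS)
qed

lemma SX_ne:
  assumes "1 \<le> n"
  shows "\<exists>i0. i0 \<in> SX n \<gamma> s c"
proof -
  let ?g = "\<lambda>i. s * c i - \<gamma> i"
  have fin: "finite (?g ` {1..n})" and ne: "?g ` {1..n} \<noteq> {}" using assms by auto
  obtain i0 where i0: "i0 \<in> {1..n}" "?g i0 = Max (?g ` {1..n})" using Max_in[OF fin ne] by auto
  have "\<forall>k\<in>{1..n}. ?g k \<le> ?g i0" using i0 Max_ge[OF fin] by auto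
  then show ?thesis using i0 unfolding SX_def by blast
qed

lemma bound_liftX:
  assumes "s \<noteq> 0" "a \<in> cvxL ((\<lambda>i. (sev s i, \<gamma> i)) ` {1..n})" "i0 \<in> SX n \<gamma> s c"
  shows "lfun n c a \<le> s * c i0 - \<gamma> i0"
proof -
  obtain w where w: "prob n {1..n} w" "a = (vS n s w, \<Sum>i\<in>{1..n}. w i * \<gamma> i)"
    using assms(2) liftX_rep[OF assms(1)] by blast
  have "(\<Sum>i\<in>{1..n}. w i * (s * c i - \<gamma> i)) \<le> s * c i0 - \<gamma> i0"
    using max_lemma[of "{1..n}" "\<lambda>i. s * c i - \<gamma> i" "s * c i0 - \<gamma> i0" w] w(1) assms(3)
    unfolding prob_def SX_def by auto
  then show ?thesis using w(2) lfun_liftX by simp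
qed

lemma cellX:
  assumes "1 \<le> n" "s \<noteq> 0"
  shows "fst ` maxface n c (cvxL ((\<lambda>i. (sev s i, \<gamma> i)) ` {1..n})) = sdelta s (SX n \<gamma> s c)"
proof -
  let ?L = "cvxL ((\<lambda>i. (sev s i, \<gamma> i)) ` {1..n})"
  let ?g = "\<lambda>i. s * c i - \<gamma> i"
  obtain i0 where i0: "i0 \<in> SX n \<gamma> s c" using SX_ne[OF assms(1)] by blast
  let ?M = "?g i0"
  have gle: "\<forall>k\<in>{1..n}. ?g k \<le> ?M" using i0 unfolding SX_def by auto
  have i0n: "i0 \<in> {1..n}" using i0 unfolding SX_def by auto
  have SXsub: "SX n \<gamma> s c \<subseteq> {1..n}" unfolding SX_def by auto
  have SXM: "\<And>i. i \<in> {1..n} \<Longrightarrow> i \<in> SX n \<gamma> s c \<longleftrightarrow> ?g i = ?M"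
    using gle i0 unfolding SX_def by (auto intro: order.antisym)
  show ?thesis
  proof (intro set_eqI iffI)
    fix x assume "x \<in> fst ` maxface n c ?L"
    then obtain z where z: "z \<in> ?L" "\<forall>w\<in>?L. lfun n c w \<le> lfun n c z" "x = fst z"
      unfolding maxface_def by auto
    obtain w where w: "prob n {1..n} w" "z = (vS n s w, \<Sum>i\<in>{1..n}. w i * \<gamma> i)"
      using z(1) liftX_rep[OF assms(2)] by blast
    have "(sev s i0, \<gamma> i0) \<in> ?L" by (rule vertex_cvxL) (use i0n in auto)
    then have "lfun n c (sev s i0, \<gamma> i0) \<le> lfun n c z" using z(2) by blast
    moreover have "lfun n c (sev s i0, \<gamma> i0) = ?M"
      unfolding lfun_def sev_def using i0n by (simp add: if_distrib cong: if_cong)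
    moreover have ml: "(\<Sum>i\<in>{1..n}. w i * ?g i) \<le> ?M \<and> ((\<Sum>i\<in>{1..n}. w i * ?g i) = ?M \<longleftrightarrow> (\<forall>i\<in>{1..n}. w i \<noteq> 0 \<longrightarrow> ?g i = ?M))"
      using max_lemma[of "{1..n}" ?g ?M w] w(1) gle unfolding prob_def by auto
    ultimately have "\<forall>i\<in>{1..n}. w i \<noteq> 0 \<longrightarrow> ?g i = ?M" using w(2) lfun_liftX[of n c s w \<gamma>] by auto
    then have "prob n (SX n \<gamma> s c) w" using w(1) SXM unfolding prob_def by blast
    then show "x \<in> sdelta s (SX n \<gamma> s c)" using sdelta_rep[OF assms(2) SXsub] z(3) w(2) by auto
  next
    fix x assume "x \<in> sdelta s (SX n \<gamma> s c)"
    then obtain w where w: "prob n (SX n \<gamma> s c) w" "x = vS n s w" using sdelta_rep[OF assms(2) SXsub] by blast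
    have pw: "prob n {1..n} w" using w(1) unfolding prob_def by auto
    let ?z = "(vS n s w, \<Sum>i\<in>{1..n}. w i * \<gamma> i)"
    have zL: "?z \<in> ?L" using liftX_rep[OF assms(2)] pw by blast
    have "\<forall>i\<in>{1..n}. w i \<noteq> 0 \<longrightarrow> ?g i = ?M" using w(1) SXM unfolding prob_def by blast
    then have "(\<Sum>i\<in>{1..n}. w i * ?g i) = ?M"
      using max_lemma[of "{1..n}" ?g ?M w] pw gle unfolding prob_def by auto
    then have lz: "lfun n c ?z = ?M" using lfun_liftX[of n c s w \<gamma>] by simp
    have "\<forall>a\<in>?L. lfun n c a \<le> lfun n c ?z" using bound_liftX[OF assms(2) _ i0] lz by auto
    then have "?z \<in> maxface n c ?L" unfolding maxface_def using zL by blast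
    then show "x \<in> fst ` maxface n c ?L" using w(2) by force
  qed
qed

lemma bases_sub: "matroid_bases n Bs \<Longrightarrow> B \<in> Bs \<Longrightarrow> B \<subseteq> {1..n}"
proof -
  assume a: "matroid_bases n Bs" "B \<in> Bs"
  from a(1)[unfolded matroid_bases_def] have "\<forall>B\<in>Bs. B \<subseteq> {1..n}" by (elim conjE) assumption
  then show ?thesis using a(2) by (rule bspec)
qed

lemma bases_fin: "matroid_bases n Bs \<Longrightarrow> B \<in> Bs \<Longrightarrow> finite B"
  by (rule finite_subset[OF bases_sub finite_atLeastAtMost])

lemma finite_Bs: "matroid_bases n Bs \<Longrightarrow> finite Bs"
proof -
  assume "matroid_bases n Bs"
  then have "Bs \<subseteq> Pow {1..n}" using bases_sub[of n Bs] by auto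
  then show ?thesis by (rule finite_subset) simp
qed

lemma exch: "matroid_bases n Bs \<Longrightarrow> B1 \<in> Bs \<Longrightarrow> B2 \<in> Bs \<Longrightarrow> x \<in> B1 - B2 \<Longrightarrow>
   \<exists>y\<in>B2 - B1. insert y (B1 - {x}) \<in> Bs"
proof -
  assume a: "matroid_bases n Bs" "B1 \<in> Bs" "B2 \<in> Bs" "x \<in> B1 - B2"
  from a(1)[unfolded matroid_bases_def] have h: "\<forall>B1\<in>Bs. \<forall>B2\<in>Bs. \<forall>x\<in>B1 - B2. \<exists>y\<in>B2 - B1. insert y (B1 - {x}) \<in> Bs"
    by (elim conjE) assumption
  show ?thesis by (rule bspec[OF bspec[OF bspec[OF h a(2)] a(3)] a(4)])
qed

lemma inj_indvec: "inj_on indvec A"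
proof (rule inj_onI)
  fix B B' assume "indvec B = indvec B'"
  then have h: "\<And>j. indvec B j = indvec B' j" by simp
  show "B = B'"
  proof (rule set_eqI)
    fix j show "j \<in> B \<longleftrightarrow> j \<in> B'" using h[of j] unfolding indvec_def by (cases "j \<in> B"; cases "j \<in> B'") simp_all
  qed
qed

lemma no_sub:
  assumes "matroid_bases n Bs" "B1 \<in> Bs" "B2 \<in> Bs" "B1 \<subseteq> B2"
  shows "B1 = B2"
proof (rule ccontr)
  assume "B1 \<noteq> B2"
  then obtain x where "x \<in> B2 - B1" using assms(4) by blast
  then obtain y where "y \<in> B1 - B2" using exch[OF assms(1,3,2)] by blast
  then show False using assms(4) by blast
qed

lemma equicard:
  assumes mb: "matroid_bases n Bs" and "B2 \<in> Bs"
  shows "B1 \<in> Bs \<Longrightarrow> card B1 = card B2"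
proof (induction "card (B1 - B2)" arbitrary: B1 rule: less_induct)
  case less
  show ?case
  proof (cases "B1 - B2 = {}")
    case True then show ?thesis using no_sub[OF mb less.prems assms(2)] by auto
  next
    case False
    then obtain x where x: "x \<in> B1 - B2" by blast
    then obtain y where y: "y \<in> B2 - B1" "insert y (B1 - {x}) \<in> Bs"
      using exch[OF mb less.prems assms(2)] by blast
    have f1: "finite B1" using bases_fin[OF mb less.prems] .
    have f2: "finite B2" using bases_fin[OF mb assms(2)] .
    have "card B1 > 0" using f1 x by (auto simp: card_gt_0_iff)
    then have c1: "card (insert y (B1 - {x})) = card B1"
      using f1 x y by (simp add: card_Diff_singleton)
    have "insert y (B1 - {x}) - B2 = (B1 - B2) - {x}" using y by auto
    moreover have "card ((B1 - B2) - {x}) < card (B1 - B2)"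
      by (rule card_Diff1_less) (use f1 x in auto)
    ultimately have "card (insert y (B1 - {x}) - B2) < card (B1 - B2)" by simp
    then have "card (insert y (B1 - {x})) = card B2" using less.hyps y(2) by blast
    then show ?thesis using c1 by simp
  qed
qed

lemma loc_glob:
  assumes mb: "matroid_bases n Bs" and B: "B \<in> Bs"
    and loc: "\<forall>f\<in>B. \<forall>e. e \<notin> B \<longrightarrow> insert e (B - {f}) \<in> Bs \<longrightarrow> c e < c f"
  shows "B' \<in> Bs \<Longrightarrow> B' \<noteq> B \<Longrightarrow> sum c B' < (sum c B :: real)"
proof (induction "card (B' - B)" arbitrary: B' rule: less_induct)
  case less
  show ?case
  proof (rule ccontr)
    assume ng: "\<not> sum c B' < sum c B"
    have fB: "finite B" using bases_fin[OF mb B] .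
    have fB': "finite B'" using bases_fin[OF mb less.prems(1)] .
    have ne: "B' - B \<noteq> {}" using no_sub[OF mb less.prems(1) B] less.prems(2) by blast
    have fin: "finite (c ` (B' - B))" using fB' by simp
    have m: "Min (c ` (B' - B)) \<in> c ` (B' - B)" using Min_in[OF fin] ne by simp
    obtain x where x0: "Min (c ` (B' - B)) = c x" "x \<in> B' - B" using m by (rule imageE)
    have x: "x \<in> B' - B" "c x = Min (c ` (B' - B))" using x0 by auto
    have xmin: "\<forall>e\<in>B' - B. c x \<le> c e" using x(2) Min_le[OF fin] by auto
    obtain y where y: "y \<in> B - B'" "insert y (B' - {x}) \<in> Bs"
      using exch[OF mb less.prems(1) B x(1)] by blast
    have sB'': "sum c (insert y (B' - {x})) = sum c B' - c x + c y"
      using fB' x y by (simp add: sum_diff1)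
    show False
    proof (cases "insert y (B' - {x}) = B")
      case True
      have "B' = insert x (B - {y})" using True x y by blast
      then have ins: "insert x (B - {y}) \<in> Bs" using less.prems(1) by simp
      have yB: "y \<in> B" and xB: "x \<notin> B" using x y by auto
      have "c x < c y" using loc yB xB ins by blast
      then show False using ng sB'' True by simp
    next
      case False
      have "insert y (B' - {x}) - B = (B' - B) - {x}" using y by auto
      moreover have "card ((B' - B) - {x}) < card (B' - B)"
        by (rule card_Diff1_less) (use fB' x in auto)
      ultimately have "card (insert y (B' - {x}) - B) < card (B' - B)" by simp
      then have "sum c (insert y (B' - {x})) < sum c B" using less.hyps y(2) False by blast
      then have cyx: "c y < c x" using sB'' ng by simp
      obtain e where e: "e \<in> B' - B" "insert e (B - {y}) \<in> Bs"
        using exch[OF mb B less.prems(1)] y(1) by blast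
      have "c e < c y" using loc y e by auto
      then show False using cyx xmin e by force
    qed
  qed
qed

lemma poly_rep:
  assumes "matroid_bases n Bs"
  shows "matroid_polytope Bs = {(\<lambda>j. \<Sum>B\<in>Bs. w B * indvec B j) | w. (\<forall>B\<in>Bs. 0 \<le> w B) \<and> sum w Bs = 1}"
  unfolding matroid_polytope_def by (rule cvx_inj[OF finite_Bs[OF assms] inj_indvec])

lemma dot_indvec: "B \<subseteq> {1..n} \<Longrightarrow> dot n c (indvec B) = sum c B"
proof -
  assume a: "B \<subseteq> {1..n}"
  have "dot n c (indvec B) = (\<Sum>i\<in>{1..n}. if i \<in> B then c i else 0)"
    unfolding dot_def indvec_def by (rule sum.cong) auto
  also have "\<dots> = sum c ({1..n} \<inter> B)" by (simp add: sum.inter_restrict)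
  also have "{1..n} \<inter> B = B" using a by blast
  finally show ?thesis .
qed

lemma dot_comb: "finite Bs \<Longrightarrow> dot n c (\<lambda>j. \<Sum>B\<in>Bs. w B * indvec B j) = (\<Sum>B\<in>Bs. w B * dot n c (indvec B))"
proof -
  assume f: "finite Bs"
  have "dot n c (\<lambda>j. \<Sum>B\<in>Bs. w B * indvec B j) = (\<Sum>i\<in>{1..n}. \<Sum>B\<in>Bs. w B * (c i * indvec B i))"
    unfolding dot_def by (rule sum.cong) (auto simp: sum_distrib_left mult.left_commute)
  also have "\<dots> = (\<Sum>B\<in>Bs. \<Sum>i\<in>{1..n}. w B * (c i * indvec B i))" by (rule sum.swap)
  also have "\<dots> = (\<Sum>B\<in>Bs. w B * dot n c (indvec B))"
    unfolding dot_def by (rule sum.cong) (auto simp: sum_distrib_left)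
  finally show ?thesis .
qed

lemma indvec_poly: "matroid_bases n Bs \<Longrightarrow> B \<in> Bs \<Longrightarrow> indvec B \<in> matroid_polytope Bs"
  unfolding matroid_polytope_def by (rule vertex_cvx) (auto simp: finite_Bs)

lemma lfun_P: "lfun n c (x, 0) = dot n c x"
  by (simp add: lfun_dot)

lemma liftP_snd: "z \<in> liftP Bs \<Longrightarrow> snd z = 0"
  unfolding liftP_def by auto

lemma inP: "matroid_bases n Bs \<Longrightarrow> B \<in> Bs \<Longrightarrow> (indvec B, 0) \<in> liftP Bs"
  unfolding liftP_def by (rule imageI) (rule indvec_poly)

lemma cellG_opt:
  assumes mb: "matroid_bases n Bs" and B1: "B1 \<in> Bs" and G: "cellG n Bs c = {indvec B1}"
    and B: "B \<in> Bs" "B \<noteq> B1"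
  shows "sum c B < sum c B1"
proof -
  have "indvec B1 \<in> fst ` maxface n c (liftP Bs)" using G unfolding cellG_def by simp
  then obtain z where z: "z \<in> maxface n c (liftP Bs)" "fst z = indvec B1" by auto
  have zP: "z \<in> liftP Bs" and zmax: "\<forall>w\<in>liftP Bs. lfun n c w \<le> lfun n c z"
    using z(1) unfolding maxface_def by auto
  have "snd z = 0" using liftP_snd[OF zP] .
  then have zz: "z = (indvec B1, 0)" using z(2) by (simp add: prod_eq_iff)
  have inB: "(indvec B, 0) \<in> liftP Bs" using inP[OF mb B(1)] .
  have le: "lfun n c (indvec B, 0) \<le> lfun n c z" using zmax inB by simp
  have l1: "lfun n c (indvec B, 0) = sum c B" using dot_indvec[OF bases_sub[OF mb B(1)]] lfun_P by simp
  have l2: "lfun n c z = sum c B1" using dot_indvec[OF bases_sub[OF mb B1]] lfun_P zz by simp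
  show ?thesis
  proof (rule ccontr)
    assume "\<not> sum c B < sum c B1"
    then have eq: "lfun n c (indvec B, 0) = lfun n c z" using le l1 l2 by simp
    have "\<forall>w\<in>liftP Bs. lfun n c w \<le> lfun n c (indvec B, 0)" using zmax eq by simp
    then have "(indvec B, 0) \<in> maxface n c (liftP Bs)"
      using inB unfolding maxface_def by simp
    then have "indvec B \<in> cellG n Bs c" unfolding cellG_def by (rule image_eqI[rotated]) simp
    then have "indvec B = indvec B1" using G by simp
    then have "B = B1" using inj_indvec[of UNIV] unfolding inj_on_def by simp
    then show False using B(2) by simp
  qed
qed

lemma lfun_poly:
  assumes mb: "matroid_bases n Bs" and "z \<in> liftP Bs"
  shows "\<exists>w. (\<forall>B\<in>Bs. 0 \<le> w B) \<and> sum w Bs = 1 \<and> z = ((\<lambda>j. \<Sum>B\<in>Bs. w B * indvec B j), 0)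
     \<and> lfun n c z = (\<Sum>B'\<in>Bs. w B' * sum c B')"
proof -
  obtain w where w: "\<forall>B\<in>Bs. 0 \<le> w B" "sum w Bs = 1" "z = ((\<lambda>j. \<Sum>B\<in>Bs. w B * indvec B j), 0)"
    using assms(2) unfolding liftP_def poly_rep[OF mb] by blast
  have "lfun n c z = (\<Sum>B\<in>Bs. w B * dot n c (indvec B))"
    using w(3) dot_comb[OF finite_Bs[OF mb]] by (simp add: lfun_P)
  also have "\<dots> = (\<Sum>B'\<in>Bs. w B' * sum c B')"
    by (rule sum.cong) (simp_all add: dot_indvec[OF bases_sub[OF mb]])
  finally show ?thesis using w by blast
qed

lemma cellG_unique:
  assumes mb: "matroid_bases n Bs" and B: "B \<in> Bs"
    and opt: "\<forall>B'\<in>Bs. B' \<noteq> B \<longrightarrow> sum c B' < sum c B"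
  shows "cellG n Bs c = {indvec B}"
proof (intro set_eqI iffI)
  have inB: "(indvec B, 0) \<in> liftP Bs" using inP[OF mb B] .
  have l1: "lfun n c (indvec B, 0) = sum c B" using dot_indvec[OF bases_sub[OF mb B]] lfun_P by simp
  have opt': "\<forall>B'\<in>Bs. sum c B' \<le> sum c B"
  proof
    fix B' assume "B' \<in> Bs" then show "sum c B' \<le> sum c B" using opt by (cases "B' = B") auto
  qed
  have fBs: "finite Bs" using finite_Bs[OF mb] .
  {
    fix x assume "x \<in> cellG n Bs c"
    then obtain z where z: "z \<in> maxface n c (liftP Bs)" "x = fst z" unfolding cellG_def by auto
    have zP: "z \<in> liftP Bs" and zmax: "\<forall>w\<in>liftP Bs. lfun n c w \<le> lfun n c z"
      using z(1) unfolding maxface_def by auto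
    obtain w where w: "\<forall>B\<in>Bs. 0 \<le> w B" "sum w Bs = 1" "z = ((\<lambda>j. \<Sum>B\<in>Bs. w B * indvec B j), 0)"
      "lfun n c z = (\<Sum>B'\<in>Bs. w B' * sum c B')" using lfun_poly[OF mb zP] by blast
    have ml: "(\<Sum>B'\<in>Bs. w B' * sum c B') \<le> sum c B \<and> ((\<Sum>B'\<in>Bs. w B' * sum c B') = sum c B \<longleftrightarrow> (\<forall>B'\<in>Bs. w B' \<noteq> 0 \<longrightarrow> sum c B' = sum c B))"
      by (rule max_lemma[OF fBs opt' w(1,2)])
    have "lfun n c (indvec B, 0) \<le> lfun n c z" using zmax inB by simp
    then have "(\<Sum>B'\<in>Bs. w B' * sum c B') = sum c B" using w(4) l1 ml[THEN conjunct1] by linarith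
    then have supp: "\<forall>B'\<in>Bs. w B' \<noteq> 0 \<longrightarrow> sum c B' = sum c B" using ml[THEN conjunct2] by blast
    have w0: "\<forall>B'\<in>Bs. B' \<noteq> B \<longrightarrow> w B' = 0"
    proof (intro ballI impI)
      fix B' assume "B' \<in> Bs" "B' \<noteq> B"
      then show "w B' = 0" using supp opt by force
    qed
    have "\<And>j. (\<Sum>B'\<in>Bs. w B' * indvec B' j) = (\<Sum>B'\<in>Bs. if B' = B then w B * indvec B j else 0)"
      by (rule sum.cong) (use w0 in auto)
    then have e1: "\<And>j. (\<Sum>B'\<in>Bs. w B' * indvec B' j) = w B * indvec B j"
      using B fBs by simp
    have "sum w Bs = (\<Sum>B'\<in>Bs. if B' = B then w B else 0)" by (rule sum.cong) (use w0 in auto)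
    then have "w B = 1" using w(2) B fBs by simp
    then show "x \<in> {indvec B}" using z(2) w(3) e1 by simp
  }
  {
    fix x assume x: "x \<in> {indvec B}"
    have "\<forall>z\<in>liftP Bs. lfun n c z \<le> lfun n c (indvec B, 0)"
    proof
      fix z assume zP: "z \<in> liftP Bs"
      obtain w where w: "\<forall>B\<in>Bs. 0 \<le> w B" "sum w Bs = 1"
        "lfun n c z = (\<Sum>B'\<in>Bs. w B' * sum c B')" using lfun_poly[OF mb zP] by blast
      have "(\<Sum>B'\<in>Bs. w B' * sum c B') \<le> sum c B" using max_lemma[OF fBs opt' w(1,2)] by simp
      then show "lfun n c z \<le> lfun n c (indvec B, 0)" using w(3) l1 by simp
    qed
    then have "(indvec B, 0) \<in> maxface n c (liftP Bs)" using inB unfolding maxface_def by simp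
    then have "indvec B \<in> cellG n Bs c" unfolding cellG_def by (rule image_eqI[rotated]) simp
    then show "x \<in> cellG n Bs c" using x by simp
  }
qed

lemma poly_sum:
  assumes mb: "matroid_bases n Bs" and B: "B \<in> Bs" and zP: "z \<in> liftP Bs"
  shows "dot n (\<lambda>_. 1) (fst z) = real (card B)"
proof -
  obtain w where w: "\<forall>B\<in>Bs. 0 \<le> w B" "sum w Bs = 1" "z = ((\<lambda>j. \<Sum>B\<in>Bs. w B * indvec B j), 0)"
    "lfun n (\<lambda>_. 1) z = (\<Sum>B'\<in>Bs. w B' * sum (\<lambda>_. 1) B')" using lfun_poly[OF mb zP] by blast
  have "dot n (\<lambda>_. 1) (fst z) = (\<Sum>B'\<in>Bs. w B' * sum (\<lambda>_. 1) B')" using w(3,4) by (simp add: lfun_P)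
  also have "\<dots> = (\<Sum>B'\<in>Bs. w B' * real (card B))"
    by (rule sum.cong) (use equicard[OF mb B] in auto)
  also have "\<dots> = real (card B)" using w(2) by (simp add: sum_distrib_right[symmetric])
  finally show ?thesis .
qed

lemma bound_P:
  assumes mb: "matroid_bases n Bs" and zP: "z \<in> liftP Bs"
    and opt: "\<forall>B'\<in>Bs. sum c B' \<le> sum c B"
  shows "lfun n c z \<le> sum c B"
proof -
  obtain w where w: "\<forall>B\<in>Bs. 0 \<le> w B" "sum w Bs = 1"
    "lfun n c z = (\<Sum>B'\<in>Bs. w B' * sum c B')" using lfun_poly[OF mb zP] by blast
  have "(\<Sum>B'\<in>Bs. w B' * sum c B') \<le> sum c B" using max_lemma[OF finite_Bs[OF mb] opt w(1,2)] by simp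
  then show ?thesis using w(3) by simp
qed

lemma lfun_vertex: "i \<in> {1..n} \<Longrightarrow> lfun n c (sev s i, \<gamma> i) = s * c i - \<gamma> i"
  unfolding lfun_def sev_def by (simp add: if_distrib cong: if_cong)

lemma dot_sev: "i \<in> {1..n} \<Longrightarrow> dot n c (sev s i) = s * c i"
  unfolding dot_def sev_def by (simp add: if_distrib cong: if_cong)

lemma lfun_add3:
  "lfun n c ((\<lambda>i. x i + (y i + w i)), h1 + (h2 + h3)) = lfun n c (x, h1) + lfun n c (y, h2) + lfun n c (w, h3)"
  unfolding lfun_def by (simp add: sum.distrib distrib_left)

lemma dot_add3:
  "dot n c (\<lambda>i. x i + (y i + w i)) = dot n c x + dot n c y + dot n c w"
  unfolding dot_def by (simp add: sum.distrib distrib_left)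

lemma Lift_dec:
  assumes "z \<in> Lift n Bs \<alpha> \<beta> u t"
  shows "\<exists>a g h. a \<in> liftA n \<alpha> u \<and> g \<in> liftP Bs \<and> h \<in> liftC n \<beta> t \<and>
     z = ((\<lambda>i. fst a i + (fst g i + fst h i)), snd a + (snd g + snd h))"
proof -
  have "z \<in> msumL (liftA n \<alpha> u) (msumL (liftP Bs) (liftC n \<beta> t))" using assms unfolding Lift_def .
  then have "\<exists>x y. z = ((\<lambda>i. fst x i + fst y i), snd x + snd y) \<and> x \<in> liftA n \<alpha> u \<and>
      y \<in> msumL (liftP Bs) (liftC n \<beta> t)" unfolding msumL_def[of "liftA n \<alpha> u"] by (rule CollectD)
  then obtain x y where xy: "z = ((\<lambda>i. fst x i + fst y i), snd x + snd y)" "x \<in> liftA n \<alpha> u"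
      "y \<in> msumL (liftP Bs) (liftC n \<beta> t)" by (elim exE conjE)
  from xy(3) have "\<exists>g h. y = ((\<lambda>i. fst g i + fst h i), snd g + snd h) \<and> g \<in> liftP Bs \<and> h \<in> liftC n \<beta> t"
    unfolding msumL_def by (rule CollectD)
  then obtain g h where gh: "y = ((\<lambda>i. fst g i + fst h i), snd g + snd h)" "g \<in> liftP Bs" "h \<in> liftC n \<beta> t"
    by (elim exE conjE)
  show ?thesis by (intro exI[of _ x] exI[of _ g] exI[of _ h]) (simp add: xy gh)
qed

lemma Lift_mem:
  assumes "a \<in> liftA n \<alpha> u" "g \<in> liftP Bs" "h \<in> liftC n \<beta> t"
  shows "((\<lambda>i. fst a i + (fst g i + fst h i)), snd a + (snd g + snd h)) \<in> Lift n Bs \<alpha> \<beta> u t"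
  unfolding Lift_def msumL_def
  apply (rule CollectI)
  apply (rule exI[of _ a], rule exI[of _ "((\<lambda>i. fst g i + fst h i), snd g + snd h)"])
  apply (intro conjI)
    apply simp
   apply (rule assms)
  apply (rule CollectI, rule exI[of _ g], rule exI[of _ h])
  using assms by simp

lemma liftX_sum:
  assumes "s \<noteq> 0" "a \<in> cvxL ((\<lambda>i. (sev s i, \<gamma> i)) ` {1..n})"
  shows "dot n (\<lambda>_. 1) (fst a) = s"
proof -
  obtain w where w: "prob n {1..n} w" "a = (vS n s w, \<Sum>i\<in>{1..n}. w i * \<gamma> i)"
    using assms(2) liftX_rep[OF assms(1)] by blast
  then show ?thesis using dot_vS[of n "\<lambda>_. 1" s w] unfolding prob_def by simp
qed

lemma Lift_sum:
  assumes mb: "matroid_bases n Bs" and B: "B \<in> Bs" and u: "0 < u" and t: "0 < t"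
    and z: "z \<in> Lift n Bs \<alpha> \<beta> u t"
  shows "dot n (\<lambda>_. 1) (fst z) = real u + real (card B) - real t"
proof -
  obtain a g h where agh: "a \<in> liftA n \<alpha> u" "g \<in> liftP Bs" "h \<in> liftC n \<beta> t"
     "z = ((\<lambda>i. fst a i + (fst g i + fst h i)), snd a + (snd g + snd h))"
    using Lift_dec[OF z] by blast
  have "dot n (\<lambda>_. 1) (fst a) = real u" using liftX_sum[of "real u" a \<alpha> n] agh(1) u unfolding liftA_def by simp
  moreover have "dot n (\<lambda>_. 1) (fst h) = - real t" using liftX_sum[of "- real t" h \<beta> n] agh(3) t unfolding liftC_def by simp
  moreover have "dot n (\<lambda>_. 1) (fst g) = real (card B)" using poly_sum[OF mb B agh(2)] .
  ultimately show ?thesis using agh(4) dot_add3 by simp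
qed

lemma heights:
  assumes "z \<in> maxface n c S" "z' \<in> maxface n c' S" "fst z = fst z'"
  shows "z \<in> maxface n c' S"
proof -
  have zS: "z \<in> S" and z'S: "z' \<in> S" using assms unfolding maxface_def by auto
  have "lfun n c z' \<le> lfun n c z" using assms(1) z'S unfolding maxface_def by auto
  then have h1: "snd z \<le> snd z'" using assms(3) by (simp add: lfun_dot)
  have "lfun n c' z \<le> lfun n c' z'" using assms(2) zS unfolding maxface_def by auto
  then have h2: "snd z' \<le> snd z" using assms(3) by (simp add: lfun_dot)
  have "z = z'" using h1 h2 assms(3) by (simp add: prod_eq_iff)
  then show ?thesis using assms(2) by simp
qed

lemma cell_max:
  assumes n1: "1 \<le> n" and mb: "matroid_bases n Bs" and B: "B \<in> Bs" and u: "0 < u" and t: "0 < t"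
    and cover: "\<forall>i\<in>{1..n}. i \<in> SX n \<alpha> (real u) c \<or> i \<in> SX n \<beta> (- real t) c"
    and oneA: "1 \<in> SX n \<alpha> (real u) c" and oneC: "1 \<in> SX n \<beta> (- real t) c"
    and opt: "\<forall>B'\<in>Bs. sum c B' \<le> sum c B"
  shows "\<forall>c'. cell n Bs \<alpha> \<beta> u t c \<subseteq> cell n Bs \<alpha> \<beta> u t c' \<longrightarrow> cell n Bs \<alpha> \<beta> u t c' = cell n Bs \<alpha> \<beta> u t c"
proof (intro allI impI)
  fix c' assume sub: "cell n Bs \<alpha> \<beta> u t c \<subseteq> cell n Bs \<alpha> \<beta> u t c'"
  let ?L = "Lift n Bs \<alpha> \<beta> u t"
  define Z where "Z = (\<lambda>i j. ((\<lambda>k. sev (real u) i k + (indvec B k + sev (- real t) j k)), \<alpha> i + (0 + \<beta> j)))"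
  have u0: "real u \<noteq> 0" and t0: "- real t \<noteq> 0" using u t by auto
  have ZL: "Z i j \<in> ?L" if "i \<in> {1..n}" "j \<in> {1..n}" for i j
  proof -
    have "(sev (real u) i, \<alpha> i) \<in> liftA n \<alpha> u" unfolding liftA_def by (rule vertex_cvxL) (use that in auto)
    moreover have "(sev (- real t) j, \<beta> j) \<in> liftC n \<beta> t" unfolding liftC_def by (rule vertex_cvxL) (use that in auto)
    moreover have "(indvec B, 0) \<in> liftP Bs" using inP[OF mb B] .
    ultimately show ?thesis using Lift_mem[of "(sev (real u) i, \<alpha> i)" n \<alpha> u "(indvec B, 0)" Bs "(sev (- real t) j, \<beta> j)" \<beta> t]
      unfolding Z_def by simp
  qed
  have lZ: "lfun n d (Z i j) = (real u * d i - \<alpha> i) + sum d B + (- real t * d j - \<beta> j)"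
    if "i \<in> {1..n}" "j \<in> {1..n}" for i j d
    unfolding Z_def lfun_add3 using that lfun_vertex dot_indvec[OF bases_sub[OF mb B]] lfun_P by simp
  have Zmax: "Z i j \<in> maxface n c ?L" if "i \<in> SX n \<alpha> (real u) c" "j \<in> SX n \<beta> (- real t) c" for i j
  proof -
    have ij: "i \<in> {1..n}" "j \<in> {1..n}" using that unfolding SX_def by auto
    have "\<forall>z\<in>?L. lfun n c z \<le> lfun n c (Z i j)"
    proof
      fix z assume "z \<in> ?L"
      then obtain a g h where agh: "a \<in> liftA n \<alpha> u" "g \<in> liftP Bs" "h \<in> liftC n \<beta> t"
         "z = ((\<lambda>i. fst a i + (fst g i + fst h i)), snd a + (snd g + snd h))"
        using Lift_dec by blast
      have "lfun n c a \<le> real u * c i - \<alpha> i"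
        using bound_liftX[OF u0 _ that(1)] agh(1) unfolding liftA_def by simp
      moreover have "lfun n c h \<le> - real t * c j - \<beta> j"
        using bound_liftX[OF t0 _ that(2)] agh(3) unfolding liftC_def by simp
      moreover have "lfun n c g \<le> sum c B" using bound_P[OF mb agh(2) opt] .
      moreover have "lfun n c z = lfun n c a + lfun n c g + lfun n c h"
        using agh(4) lfun_add3[of n c "fst a" "fst g" "fst h" "snd a" "snd g" "snd h"] by simp
      ultimately show "lfun n c z \<le> lfun n c (Z i j)" using lZ[OF ij] by simp
    qed
    then show ?thesis using ZL[OF ij] unfolding maxface_def by blast
  qed
  have Zmax': "Z i j \<in> maxface n c' ?L" if "i \<in> SX n \<alpha> (real u) c" "j \<in> SX n \<beta> (- real t) c" for i j
  proof -
    have "fst (Z i j) \<in> cell n Bs \<alpha> \<beta> u t c" unfolding cell_def using Zmax[OF that] by (rule imageI)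
    then have "fst (Z i j) \<in> cell n Bs \<alpha> \<beta> u t c'" using sub by blast
    then obtain z' where z': "z' \<in> maxface n c' ?L" "fst (Z i j) = fst z'" unfolding cell_def by auto
    show ?thesis using heights[OF Zmax[OF that] z'] .
  qed
  have eqmax: "lfun n d z1 = lfun n d z2" if "z1 \<in> maxface n d ?L" "z2 \<in> maxface n d ?L" for z1 z2 d
    using that unfolding maxface_def by (auto intro: order.antisym)
  have one: "(1::nat) \<in> {1..n}" using n1 by simp
  define dd where "dd = c' 1 - c 1"
  have shift: "c' i = c i + dd" if i: "i \<in> {1..n}" for i
  proof (cases "i \<in> SX n \<alpha> (real u) c")
    case True
    have "lfun n c' (Z i 1) = lfun n c' (Z 1 1)" using eqmax[OF Zmax'[OF True oneC] Zmax'[OF oneA oneC]] .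
    then have e1: "real u * c' i - \<alpha> i = real u * c' 1 - \<alpha> 1" using lZ[OF i one] lZ[OF one one] by simp
    have "lfun n c (Z i 1) = lfun n c (Z 1 1)" using eqmax[OF Zmax[OF True oneC] Zmax[OF oneA oneC]] .
    then have e2: "real u * c i - \<alpha> i = real u * c 1 - \<alpha> 1" using lZ[OF i one] lZ[OF one one] by simp
    have "real u * (c' i - c i - (c' 1 - c 1)) = 0" using e1 e2 by (simp add: algebra_simps)
    then show ?thesis using u0 unfolding dd_def by simp
  next
    case False
    then have Fa: "i \<in> SX n \<beta> (- real t) c" using cover i by blast
    have "lfun n c' (Z 1 i) = lfun n c' (Z 1 1)" using eqmax[OF Zmax'[OF oneA Fa] Zmax'[OF oneA oneC]] .
    then have e1: "- real t * c' i - \<beta> i = - real t * c' 1 - \<beta> 1" using lZ[OF one i] lZ[OF one one] by simp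
    have "lfun n c (Z 1 i) = lfun n c (Z 1 1)" using eqmax[OF Zmax[OF oneA Fa] Zmax[OF oneA oneC]] .
    then have e2: "- real t * c i - \<beta> i = - real t * c 1 - \<beta> 1" using lZ[OF one i] lZ[OF one one] by simp
    have "real t * (c' i - c i - (c' 1 - c 1)) = 0" using e1 e2 by (simp add: algebra_simps)
    then show ?thesis using t unfolding dd_def by simp
  qed
  have lrel: "lfun n c' z = lfun n c z + dd * (real u + real (card B) - real t)" if "z \<in> ?L" for z
  proof -
    have "(\<Sum>i\<in>{1..n}. c' i * fst z i) = (\<Sum>i\<in>{1..n}. c i * fst z i + dd * fst z i)"
      by (rule sum.cong) (auto simp: shift distrib_right)
    then have "lfun n c' z = (\<Sum>i\<in>{1..n}. c i * fst z i + dd * fst z i) - snd z"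
      unfolding lfun_def by simp
    also have "\<dots> = lfun n c z + dd * dot n (\<lambda>_. 1) (fst z)"
      unfolding lfun_def dot_def by (simp add: sum.distrib sum_distrib_left)
    finally show ?thesis using Lift_sum[OF mb B u t that] by simp
  qed
  have "maxface n c' ?L = maxface n c ?L"
    unfolding maxface_def using lrel by auto
  then show "cell n Bs \<alpha> \<beta> u t c' = cell n Bs \<alpha> \<beta> u t c" unfolding cell_def by simp
qed

definition cc :: "nat \<Rightarrow> nat \<Rightarrow> (nat \<Rightarrow> real) \<Rightarrow> (nat \<Rightarrow> real) \<Rightarrow> nat set \<Rightarrow> nat set \<Rightarrow> nat \<Rightarrow> real" where
  "cc u t \<alpha> \<beta> X Y i = (if i \<in> X then (\<alpha> i - \<alpha> 1) / real u else if i \<in> Y then - ((\<beta> i - \<beta> 1) / real t) else 0)"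

lemma part_sub: "X \<union> Y = {2..n} \<Longrightarrow> X \<subseteq> {2..n} \<and> Y \<subseteq> {2..(n::nat)}"
  by blast
lemma notin1: "X \<subseteq> {2..(n::nat)} \<Longrightarrow> 1 \<notin> X"
  by auto
lemma ins_sub: "X \<subseteq> {2..(n::nat)} \<Longrightarrow> 1 \<le> n \<Longrightarrow> insert 1 X \<subseteq> {1..n}"
  by auto

lemma smono_lt:
  assumes "strict_mono_on {1..(n::nat)} \<alpha>" "i \<in> {1..n}" "k \<in> {1..n}" "i < k"
  shows "\<alpha> i < (\<alpha> k :: real)"
  using assms unfolding strict_mono_on_def by blast

lemma smono_le:
  assumes "strict_mono_on {1..(n::nat)} \<alpha>" "i \<in> {1..n}" "k \<in> {1..n}" "i \<le> k"
  shows "\<alpha> i \<le> (\<alpha> k :: real)"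
proof -
  have "i < k \<or> i = k" by (rule le_imp_less_or_eq[OF assms(4)])
  then show ?thesis using smono_lt[OF assms(1-3)] by auto
qed

lemma SX_cc:
  assumes n1: "1 \<le> n" and u: "0 < u" and t: "0 < t"
    and am: "strict_mono_on {1..n} \<alpha>" and bm: "strict_mono_on {1..n} \<beta>"
    and XY: "X \<union> Y = {2..n}" "X \<inter> Y = {}"
  shows "SX n \<alpha> (real u) (cc u t \<alpha> \<beta> X Y) = insert 1 X \<and> SX n \<beta> (- real t) (cc u t \<alpha> \<beta> X Y) = insert 1 Y"
proof -
  let ?c = "cc u t \<alpha> \<beta> X Y"
  let ?g = "\<lambda>i. real u * ?c i - \<alpha> i"
  let ?k = "\<lambda>i. - real t * ?c i - \<beta> i"
  have one: "(1::nat) \<in> {1..n}" using n1 by simp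
  have Xs: "X \<subseteq> {2..n}" and Ys: "Y \<subseteq> {2..n}" using part_sub[OF XY(1)] by auto
  have iX: "insert 1 X \<subseteq> {1..n}" using ins_sub[OF Xs n1] .
  have iY: "insert 1 Y \<subseteq> {1..n}" using ins_sub[OF Ys n1] .
  have n1X: "(1::nat) \<notin> X" and n1Y: "(1::nat) \<notin> Y" using notin1 Xs Ys by auto
  have c1: "?c 1 = 0" using n1X n1Y by (simp add: cc_def)
  have cX: "?c i = (\<alpha> i - \<alpha> 1) / real u" if "i \<in> X" for i using that by (simp add: cc_def)
  have cY: "?c i = - ((\<beta> i - \<beta> 1) / real t)" if "i \<in> Y" for i
  proof -
    have "i \<notin> X" using that XY(2) by blast
    then show ?thesis using that by (simp add: cc_def)
  qed
  have gX: "?g i = - \<alpha> 1" if "i \<in> insert 1 X" for i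
  proof (cases "i = 1")
    case True then show ?thesis using c1 by simp
  next
    case False then have "i \<in> X" using that by simp
    then show ?thesis using cX u by simp
  qed
  have kY: "?k i = - \<beta> 1" if "i \<in> insert 1 Y" for i
  proof (cases "i = 1")
    case True then show ?thesis using c1 by simp
  next
    case False then have "i \<in> Y" using that by simp
    then show ?thesis using cY t by simp
  qed
  have gY: "?g i < - \<alpha> 1" if "i \<in> Y" for i
  proof -
    have "i \<in> {2..n}" using that Ys by blast
    then have i: "i \<in> {1..n}" "1 < i" by auto
    have "\<alpha> 1 < \<alpha> i" using smono_lt[OF am one i(1) i(2)] .
    moreover have "\<beta> 1 < \<beta> i" using smono_lt[OF bm one i(1) i(2)] .
    then have "0 < real u * ((\<beta> i - \<beta> 1) / real t)" using u t by simp
    ultimately show ?thesis using cY[OF that] by simp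
  qed
  have kX: "?k i < - \<beta> 1" if "i \<in> X" for i
  proof -
    have "i \<in> {2..n}" using that Xs by blast
    then have i: "i \<in> {1..n}" "1 < i" by auto
    have "\<beta> 1 < \<beta> i" using smono_lt[OF bm one i(1) i(2)] .
    moreover have "\<alpha> 1 < \<alpha> i" using smono_lt[OF am one i(1) i(2)] .
    then have "0 < real t * ((\<alpha> i - \<alpha> 1) / real u)" using u t by simp
    ultimately show ?thesis using cX[OF that] by simp
  qed
  have all: "i \<in> insert 1 X \<or> i \<in> Y" if "i \<in> {1..n}" for i
  proof (cases "i = 1")
    case False then have "i \<in> {2..n}" using that by auto
    then show ?thesis using XY(1) by blast
  qed simp
  have allY: "i \<in> insert 1 Y \<or> i \<in> X" if "i \<in> {1..n}" for i
  proof (cases "i = 1")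
    case False then have "i \<in> {2..n}" using that by auto
    then show ?thesis using XY(1) by blast
  qed simp
  have s1: "SX n \<alpha> (real u) ?c = insert 1 X"
  proof (intro set_eqI iffI)
    fix i assume "i \<in> SX n \<alpha> (real u) ?c"
    then have i: "i \<in> {1..n}" "?g 1 \<le> ?g i" unfolding SX_def using one by auto
    show "i \<in> insert 1 X"
    proof (rule ccontr)
      assume "i \<notin> insert 1 X"
      then have "i \<in> Y" using all i(1) by blast
      have "?g 1 = - \<alpha> 1" using gX[of 1] by simp
      then show False using gY[OF \<open>i \<in> Y\<close>] i(2) by linarith
    qed
  next
    fix i assume i: "i \<in> insert 1 X"
    have "i \<in> {1..n}" using i iX by blast
    moreover have "\<forall>k\<in>{1..n}. ?g k \<le> ?g i"
    proof
      fix k assume k: "k \<in> {1..n}"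
      show "?g k \<le> ?g i"
      proof (cases "k \<in> insert 1 X")
        case True then show ?thesis using gX i by simp
      next
        case False then have "k \<in> Y" using all k by blast
        then show ?thesis using gX[OF i] gY[of k] by linarith
      qed
    qed
    ultimately show "i \<in> SX n \<alpha> (real u) ?c" unfolding SX_def by blast
  qed
  have s2: "SX n \<beta> (- real t) ?c = insert 1 Y"
  proof (intro set_eqI iffI)
    fix i assume "i \<in> SX n \<beta> (- real t) ?c"
    then have i: "i \<in> {1..n}" "?k 1 \<le> ?k i" unfolding SX_def using one by auto
    show "i \<in> insert 1 Y"
    proof (rule ccontr)
      assume "i \<notin> insert 1 Y"
      then have "i \<in> X" using allY i(1) by blast
      have "?k 1 = - \<beta> 1" using kY[of 1] by simp
      then show False using kX[OF \<open>i \<in> X\<close>] i(2) by linarith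
    qed
  next
    fix i assume i: "i \<in> insert 1 Y"
    have "i \<in> {1..n}" using i iY by blast
    moreover have "\<forall>k\<in>{1..n}. ?k k \<le> ?k i"
    proof
      fix k assume k: "k \<in> {1..n}"
      show "?k k \<le> ?k i"
      proof (cases "k \<in> insert 1 Y")
        case True then show ?thesis using kY i by simp
      next
        case False then have "k \<in> X" using allY k by blast
        then show ?thesis using kY[OF i] kX[of k] by linarith
      qed
    qed
    ultimately show "i \<in> SX n \<beta> (- real t) ?c" unfolding SX_def by blast
  qed
  show ?thesis using s1 s2 by simp
qed

lemma c_vals:
  assumes n1: "1 \<le> n" and u: "0 < u" and t: "0 < t"
    and XY: "X \<union> Y = {2..n}" "X \<inter> Y = {}"
    and SA: "SX n \<alpha> (real u) c = insert 1 X" and SC: "SX n \<beta> (- real t) c = insert 1 Y"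
    and i: "i \<in> {1..n}"
  shows "c i - c 1 = cc u t \<alpha> \<beta> X Y i"
proof -
  have one: "(1::nat) \<in> SX n \<alpha> (real u) c" "(1::nat) \<in> SX n \<beta> (- real t) c" using SA SC by auto
  have n1': "(1::nat) \<in> {1..n}" using n1 by simp
  have "i = 1 \<or> i \<in> X \<or> i \<in> Y"
  proof (cases "i = 1")
    case False then have "i \<in> {2..n}" using i by auto
    then show ?thesis using XY(1) by blast
  qed simp
  then consider "i = 1" | "i \<in> X" | "i \<in> Y" by blast
  then show ?thesis
  proof cases
    case 1 then show ?thesis using XY by (auto simp: cc_def)
  next
    case 2
    then have "i \<in> SX n \<alpha> (real u) c" using SA by auto
    then have "real u * c 1 - \<alpha> 1 \<le> real u * c i - \<alpha> i" using n1' unfolding SX_def by auto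
    moreover have "real u * c i - \<alpha> i \<le> real u * c 1 - \<alpha> 1" using one(1) i unfolding SX_def by auto
    ultimately have "real u * (c i - c 1) = \<alpha> i - \<alpha> 1" by (simp add: algebra_simps)
    then have "c i - c 1 = (\<alpha> i - \<alpha> 1) / real u" using u by (simp add: field_simps)
    then show ?thesis using 2 by (simp add: cc_def)
  next
    case 3
    then have "i \<in> SX n \<beta> (- real t) c" using SC by auto
    then have "- real t * c 1 - \<beta> 1 \<le> - real t * c i - \<beta> i" using n1' unfolding SX_def by auto
    moreover have "- real t * c i - \<beta> i \<le> - real t * c 1 - \<beta> 1" using one(2) i unfolding SX_def by auto
    ultimately have "real t * (c i - c 1) = - (\<beta> i - \<beta> 1)" by (simp add: algebra_simps)
    then have "c i - c 1 = - ((\<beta> i - \<beta> 1) / real t)" using t by (simp add: field_simps)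
    moreover have "i \<notin> X" using 3 XY by auto
    ultimately show ?thesis using 3 by (simp add: cc_def)
  qed
qed

lemma comb:
  assumes u: "0 < u" and t: "0 < t"
    and am: "strict_mono_on {1..n} \<alpha>" and bm: "strict_mono_on {1..n} \<beta>"
    and P1: "X1 \<union> Y1 = {2..n}" "X1 \<inter> Y1 = {}"
    and P2: "X2 \<union> Y2 = {2..n}" "X2 \<inter> Y2 = {}"
    and P3: "X3 \<union> Y3 = {2..n}" "X3 \<inter> Y3 = {}"
    and s1: "X1 \<inter> X2 \<subseteq> X3" and s2: "Y1 \<inter> Y2 \<subseteq> Y3"
    and e: "e \<in> {1..n}" and f: "f \<in> {1..n}"
    and l1: "cc u t \<alpha> \<beta> X1 Y1 e < cc u t \<alpha> \<beta> X1 Y1 f"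
    and l2: "cc u t \<alpha> \<beta> X2 Y2 e < cc u t \<alpha> \<beta> X2 Y2 f"
  shows "cc u t \<alpha> \<beta> X3 Y3 e < cc u t \<alpha> \<beta> X3 Y3 f"
proof -
  let ?vX = "\<lambda>i. (\<alpha> i - \<alpha> 1) / real u"
  let ?vY = "\<lambda>i. - ((\<beta> i - \<beta> 1) / real t)"
  let ?c1 = "cc u t \<alpha> \<beta> X1 Y1" and ?c2 = "cc u t \<alpha> \<beta> X2 Y2" and ?c3 = "cc u t \<alpha> \<beta> X3 Y3"
  have one: "(1::nat) \<in> {1..n}" using e by auto
  have n1s: "(1::nat) \<notin> X1" "(1::nat) \<notin> Y1" "(1::nat) \<notin> X2" "(1::nat) \<notin> Y2"
    using notin1 part_sub[OF P1(1)] part_sub[OF P2(1)] by auto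
  have vXpos: "0 < ?vX i" if "i \<in> {2..n}" for i
    using smono_lt[OF am one, of i] that u by auto
  have vYneg: "?vY i < 0" if "i \<in> {2..n}" for i
    using smono_lt[OF bm one, of i] that t by auto
  have vXmono: "i < k" if "i \<in> {1..n}" "k \<in> {1..n}" "?vX i < ?vX k" for i k
  proof (rule ccontr)
    assume "\<not> i < k" then have "\<alpha> k \<le> \<alpha> i" using smono_le[OF am that(2,1)] by simp
    then have "(\<alpha> k - \<alpha> 1) / real u \<le> (\<alpha> i - \<alpha> 1) / real u" using u by (simp add: divide_right_mono)
    then show False using that(3) by simp
  qed
  have vYmono: "k < i" if "i \<in> {1..n}" "k \<in> {1..n}" "?vY i < ?vY k" for i k
  proof (rule ccontr)
    assume "\<not> k < i" then have "\<beta> i \<le> \<beta> k" using smono_le[OF bm that(1,2)] by simp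
    then have "(\<beta> i - \<beta> 1) / real t \<le> (\<beta> k - \<beta> 1) / real t" using t by (simp add: divide_right_mono)
    then show False using that(3) by simp
  qed
  have c3o: "?c3 i = ?c1 i \<or> ?c3 i = ?c2 i" if "i \<in> {1..n}" for i
    using that P1 P2 P3 s1 s2 by (cases "i = 1") (auto simp: cc_def)
  have c3e: "?c3 i = ?c1 i" if "i \<in> {1..n}" "?c1 i = ?c2 i" for i
  proof (cases "i = 1")
    case True then show ?thesis using P1 P3 by (auto simp: cc_def)
  next
    case False
    then have i2: "i \<in> {2..n}" using that(1) by auto
    consider "i \<in> X1 \<inter> X2" | "i \<in> Y1 \<inter> Y2" | "i \<in> X1 \<inter> Y2" | "i \<in> Y1 \<inter> X2"
      using i2 P1 P2 by blast
    then show ?thesis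
    proof cases
      case 1 then show ?thesis using s1 by (auto simp: cc_def)
    next
      case 2 then show ?thesis using s2 P1 P3 by (auto simp: cc_def)
    next
      case 3 then have "?c1 i = ?vX i" "?c2 i = ?vY i" using P2 by (auto simp: cc_def)
      then show ?thesis using that(2) vXpos[OF i2] vYneg[OF i2] by simp
    next
      case 4 then have "?c1 i = ?vY i" "?c2 i = ?vX i" using P1 by (auto simp: cc_def)
      then show ?thesis using that(2) vXpos[OF i2] vYneg[OF i2] by simp
    qed
  qed
  have D: "i \<in> {2..n} \<and> ((i \<in> X1 \<inter> Y2 \<and> ?c1 i = ?vX i \<and> ?c2 i = ?vY i) \<or> (i \<in> Y1 \<inter> X2 \<and> ?c1 i = ?vY i \<and> ?c2 i = ?vX i))"
    if "i \<in> {1..n}" "?c1 i \<noteq> ?c2 i" for i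
  proof -
    have "i \<noteq> 1" using that n1s by (auto simp: cc_def)
    then have i2: "i \<in> {2..n}" using that(1) by auto
    then have "i \<in> X1 \<inter> X2 \<or> i \<in> Y1 \<inter> Y2 \<or> i \<in> X1 \<inter> Y2 \<or> i \<in> Y1 \<inter> X2" using P1 P2 by blast
    moreover have "i \<notin> X1 \<inter> X2" using that(2) by (auto simp: cc_def)
    moreover have "i \<notin> Y1 \<inter> Y2"
    proof
      assume a: "i \<in> Y1 \<inter> Y2"
      then have "i \<notin> X1" "i \<notin> X2" using P1(2) P2(2) by blast+
      then have "?c1 i = ?c2 i" using a by (simp add: cc_def)
      then show False using that(2) by simp
    qed
    ultimately show ?thesis using i2 P1 P2 by (auto simp: cc_def)
  qed
  show ?thesis
  proof (cases "?c1 f = ?c2 f")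
    case True
    then show ?thesis using c3e[OF f True] c3o[OF e] l1 l2 by auto
  next
    case Ff: False
    show ?thesis
    proof (cases "?c1 e = ?c2 e")
      case True
      then show ?thesis using c3e[OF e True] c3o[OF f] l1 l2 by auto
    next
      case Fe: False
      have df: "f \<in> {2..n}" and de: "e \<in> {2..n}" using D[OF f Ff] D[OF e Fe] by auto
      from D[OF f Ff] D[OF e Fe] show ?thesis
      proof (elim conjE disjE)
        assume "?c1 f = ?vX f" "?c2 f = ?vY f" "?c1 e = ?vX e" "?c2 e = ?vY e"
        then have "e < f" "f < e" using vXmono[OF e f] vYmono[OF e f] l1 l2 by auto
        then show ?thesis by simp
      next
        assume "?c1 f = ?vX f" "?c2 f = ?vY f" "?c1 e = ?vY e" "?c2 e = ?vX e"
        then show ?thesis using l2 vXpos[OF de] vYneg[OF df] by simp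
      next
        assume "?c1 f = ?vY f" "?c2 f = ?vX f" "?c1 e = ?vX e" "?c2 e = ?vY e"
        then show ?thesis using l1 vXpos[OF de] vYneg[OF df] by simp
      next
        assume "?c1 f = ?vY f" "?c2 f = ?vX f" "?c1 e = ?vY e" "?c2 e = ?vX e"
        then have "e < f" "f < e" using vXmono[OF e f] vYmono[OF e f] l1 l2 by auto
        then show ?thesis by simp
      qed
    qed
  qed
qed

lemma cellF_eq: "1 \<le> n \<Longrightarrow> 0 < u \<Longrightarrow> cellF n \<alpha> u c = sdelta (real u) (SX n \<alpha> (real u) c)"
  unfolding cellF_def liftA_def by (rule cellX) auto

lemma cellH_eq: "1 \<le> n \<Longrightarrow> 0 < t \<Longrightarrow> cellH n \<beta> t c = sdelta (- real t) (SX n \<beta> (- real t) c)"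
  unfolding cellH_def liftC_def by (rule cellX) auto

lemma SX_sub: "SX n \<gamma> s c \<subseteq> {1..n}"
  unfolding SX_def by auto

lemma isT_facts:
  assumes n1: "1 \<le> n" and mb: "matroid_bases n Bs" and u: "0 < u" and t: "0 < t"
    and XY: "X \<union> Y = {2..n}" and isT: "is_T n Bs \<alpha> \<beta> u t X Y B"
  shows "B \<in> Bs \<and> (\<exists>c. SX n \<alpha> (real u) c = insert 1 X \<and> SX n \<beta> (- real t) c = insert 1 Y \<and>
           (\<forall>B'\<in>Bs. B' \<noteq> B \<longrightarrow> sum c B' < sum c B))"
proof -
  have B: "B \<in> Bs" using isT unfolding is_T_def by (elim conjE)
  have "top_degree_face n Bs \<alpha> \<beta> u t (sdelta (real u) (insert 1 X)) {indvec B} (sdelta (- real t) (insert 1 Y))"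
    using isT unfolding is_T_def by (elim conjE)
  then obtain c where F: "sdelta (real u) (insert 1 X) = cellF n \<alpha> u c"
      and G: "{indvec B} = cellG n Bs c" and H: "sdelta (- real t) (insert 1 Y) = cellH n \<beta> t c"
    unfolding top_degree_face_def by (elim exE conjE)
  have Xs: "X \<subseteq> {2..n}" and Ys: "Y \<subseteq> {2..n}" using part_sub[OF XY] by auto
  have "insert 1 X = SX n \<alpha> (real u) c"
    by (rule sdelta_inj[of "real u" _ n]) (use u ins_sub[OF Xs n1] SX_sub F cellF_eq[OF n1 u] in auto)
  moreover have "insert 1 Y = SX n \<beta> (- real t) c"
    by (rule sdelta_inj[of "- real t" _ n]) (use t ins_sub[OF Ys n1] SX_sub H cellH_eq[OF n1 t] in auto)
  moreover have "\<forall>B'\<in>Bs. B' \<noteq> B \<longrightarrow> sum c B' < sum c B"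
    using cellG_opt[OF mb B G[symmetric]] by blast
  ultimately show ?thesis using B by auto
qed

lemma Tface_obtain:
  assumes u: "0 < u" and t: "0 < t" and iX: "insert 1 X \<subseteq> {1..n}" and iY: "insert 1 Y \<subseteq> {1..n}"
    and p: "p \<in> Tface u t X Y B"
  shows "\<exists>l m. prob n (insert 1 X) l \<and> prob n (insert 1 Y) m \<and>
     p = (\<lambda>j. indvec B j + (vS n (real u) l j + vS n (- real t) m j))"
proof -
  have "\<exists>x y. p = (\<lambda>i. x i + y i) \<and> x \<in> {indvec B} \<and>
      y \<in> msum (sdelta (real u) (insert 1 X)) (sdelta (- real t) (insert 1 Y))"
    using p unfolding Tface_def msum_def[of "{indvec B}"] by (rule CollectD)
  then obtain x y where xy: "p = (\<lambda>i. x i + y i)" "x \<in> {indvec B}"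
      "y \<in> msum (sdelta (real u) (insert 1 X)) (sdelta (- real t) (insert 1 Y))" by (elim exE conjE)
  have "\<exists>a b. y = (\<lambda>i. a i + b i) \<and> a \<in> sdelta (real u) (insert 1 X) \<and> b \<in> sdelta (- real t) (insert 1 Y)"
    using xy(3) unfolding msum_def by (rule CollectD)
  then obtain a b where ab: "y = (\<lambda>i. a i + b i)" "a \<in> sdelta (real u) (insert 1 X)"
      "b \<in> sdelta (- real t) (insert 1 Y)" by (elim exE conjE)
  obtain l where l: "prob n (insert 1 X) l" "a = vS n (real u) l"
    using ab(2) sdelta_rep[of "real u" "insert 1 X" n] u iX by auto
  obtain m where m: "prob n (insert 1 Y) m" "b = vS n (- real t) m"
    using ab(3) sdelta_rep[of "- real t" "insert 1 Y" n] t iY by auto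
  show ?thesis using xy ab l m by auto
qed

lemma Tface_intro:
  assumes u: "0 < u" and t: "0 < t" and iX: "insert 1 X \<subseteq> {1..n}" and iY: "insert 1 Y \<subseteq> {1..n}"
    and l: "prob n (insert 1 X) l" and m: "prob n (insert 1 Y) m"
  shows "(\<lambda>j. indvec B j + (vS n (real u) l j + vS n (- real t) m j)) \<in> Tface u t X Y B"
proof -
  have a: "vS n (real u) l \<in> sdelta (real u) (insert 1 X)"
    using sdelta_rep[of "real u" "insert 1 X" n] u iX l by auto
  have b: "vS n (- real t) m \<in> sdelta (- real t) (insert 1 Y)"
    using sdelta_rep[of "- real t" "insert 1 Y" n] t iY m by auto
  have y: "(\<lambda>j. vS n (real u) l j + vS n (- real t) m j) \<in> msum (sdelta (real u) (insert 1 X)) (sdelta (- real t) (insert 1 Y))"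
    unfolding msum_def using a b by blast
  show ?thesis unfolding Tface_def msum_def[of "{indvec B}"]
    apply (rule CollectI)
    apply (rule exI[of _ "indvec B"], rule exI[of _ "\<lambda>j. vS n (real u) l j + vS n (- real t) m j"])
    using y by simp
qed

lemma sc_eq: "dot n c (vS n s w) = (\<Sum>i\<in>{1..n}. w i * (s * c i - \<gamma> i)) + (\<Sum>i\<in>{1..n}. w i * \<gamma> i)"
  using lfun_liftX[of n c s w \<gamma>] by (simp add: lfun_dot)

lemma side:
  assumes mb: "matroid_bases n Bs" and B: "B \<in> Bs" and B': "B' \<in> Bs"
    and SA: "SX n \<alpha> (real u) c = insert 1 X" and SC: "SX n \<beta> (- real t) c = insert 1 Y"
    and opt: "\<forall>B''\<in>Bs. B'' \<noteq> B \<longrightarrow> sum c B'' < sum c B"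
    and l: "prob n (insert 1 X) l" and m: "prob n (insert 1 Y) m"
    and l': "prob n {1..n} l'" and m': "prob n {1..n} m'"
    and eq: "(\<lambda>j. indvec B j + (vS n (real u) l j + vS n (- real t) m j)) =
             (\<lambda>j. indvec B' j + (vS n (real u) l' j + vS n (- real t) m' j))"
  shows "(\<Sum>i\<in>{1..n}. l i * \<alpha> i) + (\<Sum>i\<in>{1..n}. m i * \<beta> i) \<le> (\<Sum>i\<in>{1..n}. l' i * \<alpha> i) + (\<Sum>i\<in>{1..n}. m' i * \<beta> i)
    \<and> ((\<Sum>i\<in>{1..n}. l i * \<alpha> i) + (\<Sum>i\<in>{1..n}. m i * \<beta> i) = (\<Sum>i\<in>{1..n}. l' i * \<alpha> i) + (\<Sum>i\<in>{1..n}. m' i * \<beta> i)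
       \<longrightarrow> B' = B \<and> (\<forall>i\<in>{1..n}. l' i \<noteq> 0 \<longrightarrow> i \<in> insert 1 X) \<and> (\<forall>i\<in>{1..n}. m' i \<noteq> 0 \<longrightarrow> i \<in> insert 1 Y))"
proof -
  let ?g = "\<lambda>i. real u * c i - \<alpha> i"
  let ?k = "\<lambda>i. - real t * c i - \<beta> i"
  have oA: "1 \<in> SX n \<alpha> (real u) c" and oC: "1 \<in> SX n \<beta> (- real t) c" using SA SC by auto
  have gle: "\<forall>i\<in>{1..n}. ?g i \<le> ?g 1" using oA unfolding SX_def by auto
  have kle: "\<forall>i\<in>{1..n}. ?k i \<le> ?k 1" using oC unfolding SX_def by auto
  have giff: "?g i = ?g 1 \<longleftrightarrow> i \<in> insert 1 X" if i: "i \<in> {1..n}" for i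
  proof
    assume "?g i = ?g 1"
    then have "i \<in> SX n \<alpha> (real u) c" using gle i unfolding SX_def by auto
    then show "i \<in> insert 1 X" using SA by simp
  next
    assume "i \<in> insert 1 X"
    then have "i \<in> SX n \<alpha> (real u) c" using SA by simp
    then have "?g 1 \<le> ?g i" using oA unfolding SX_def by auto
    then show "?g i = ?g 1" using gle i by (auto intro: order.antisym)
  qed
  have kiff: "?k i = ?k 1 \<longleftrightarrow> i \<in> insert 1 Y" if i: "i \<in> {1..n}" for i
  proof
    assume "?k i = ?k 1"
    then have "i \<in> SX n \<beta> (- real t) c" using kle i unfolding SX_def by auto
    then show "i \<in> insert 1 Y" using SC by simp
  next
    assume "i \<in> insert 1 Y"
    then have "i \<in> SX n \<beta> (- real t) c" using SC by simp
    then have "?k 1 \<le> ?k i" using oC unfolding SX_def by auto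
    then show "?k i = ?k 1" using kle i by (auto intro: order.antisym)
  qed
  have pl: "\<forall>i\<in>{1..n}. 0 \<le> l i" "sum l {1..n} = 1" "\<forall>i\<in>{1..n}. i \<notin> insert 1 X \<longrightarrow> l i = 0"
    using l unfolding prob_def by auto
  have pm: "\<forall>i\<in>{1..n}. 0 \<le> m i" "sum m {1..n} = 1" "\<forall>i\<in>{1..n}. i \<notin> insert 1 Y \<longrightarrow> m i = 0"
    using m unfolding prob_def by auto
  have pl': "\<forall>i\<in>{1..n}. 0 \<le> l' i" "sum l' {1..n} = 1" using l' unfolding prob_def by auto
  have pm': "\<forall>i\<in>{1..n}. 0 \<le> m' i" "sum m' {1..n} = 1" using m' unfolding prob_def by auto
  have fin: "finite {1..n}" by simp
  have Al: "(\<Sum>i\<in>{1..n}. l i * ?g i) = ?g 1"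
  proof -
    have "\<forall>i\<in>{1..n}. l i \<noteq> 0 \<longrightarrow> ?g i = ?g 1" using pl(3) giff by blast
    then show ?thesis using max_lemma[OF fin gle pl(1,2)] by blast
  qed
  have Cm: "(\<Sum>i\<in>{1..n}. m i * ?k i) = ?k 1"
  proof -
    have "\<forall>i\<in>{1..n}. m i \<noteq> 0 \<longrightarrow> ?k i = ?k 1" using pm(3) kiff by blast
    then show ?thesis using max_lemma[OF fin kle pm(1,2)] by blast
  qed
  have Al': "(\<Sum>i\<in>{1..n}. l' i * ?g i) \<le> ?g 1 \<and> ((\<Sum>i\<in>{1..n}. l' i * ?g i) = ?g 1 \<longleftrightarrow> (\<forall>i\<in>{1..n}. l' i \<noteq> 0 \<longrightarrow> ?g i = ?g 1))"
    by (rule max_lemma[OF fin gle pl'])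
  have Cm': "(\<Sum>i\<in>{1..n}. m' i * ?k i) \<le> ?k 1 \<and> ((\<Sum>i\<in>{1..n}. m' i * ?k i) = ?k 1 \<longleftrightarrow> (\<forall>i\<in>{1..n}. m' i \<noteq> 0 \<longrightarrow> ?k i = ?k 1))"
    by (rule max_lemma[OF fin kle pm'])
  have sB: "sum c B' \<le> sum c B" using opt B' by (cases "B' = B") auto
  have BB: "B \<subseteq> {1..n}" "B' \<subseteq> {1..n}" using bases_sub[OF mb] B B' by auto
  have "dot n c (\<lambda>j. indvec B j + (vS n (real u) l j + vS n (- real t) m j)) =
        dot n c (\<lambda>j. indvec B' j + (vS n (real u) l' j + vS n (- real t) m' j))" using eq by simp
  then have "sum c B + ((\<Sum>i\<in>{1..n}. l i * ?g i) + (\<Sum>i\<in>{1..n}. l i * \<alpha> i))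
               + ((\<Sum>i\<in>{1..n}. m i * ?k i) + (\<Sum>i\<in>{1..n}. m i * \<beta> i)) =
             sum c B' + ((\<Sum>i\<in>{1..n}. l' i * ?g i) + (\<Sum>i\<in>{1..n}. l' i * \<alpha> i))
               + ((\<Sum>i\<in>{1..n}. m' i * ?k i) + (\<Sum>i\<in>{1..n}. m' i * \<beta> i))"
    unfolding dot_add3 dot_indvec[OF BB(1)] dot_indvec[OF BB(2)] sc_eq[of n c "real u" _ \<alpha>] sc_eq[of n c "- real t" _ \<beta>] .
  then have key: "sum c B + ?g 1 + ?k 1 + ((\<Sum>i\<in>{1..n}. l i * \<alpha> i) + (\<Sum>i\<in>{1..n}. m i * \<beta> i)) =
             sum c B' + (\<Sum>i\<in>{1..n}. l' i * ?g i) + (\<Sum>i\<in>{1..n}. m' i * ?k i) + ((\<Sum>i\<in>{1..n}. l' i * \<alpha> i) + (\<Sum>i\<in>{1..n}. m' i * \<beta> i))"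
    using Al Cm by simp
  show ?thesis
  proof (intro conjI impI)
    show "(\<Sum>i\<in>{1..n}. l i * \<alpha> i) + (\<Sum>i\<in>{1..n}. m i * \<beta> i) \<le> (\<Sum>i\<in>{1..n}. l' i * \<alpha> i) + (\<Sum>i\<in>{1..n}. m' i * \<beta> i)"
      using key sB Al'[THEN conjunct1] Cm'[THEN conjunct1] by linarith
  next
    assume h: "(\<Sum>i\<in>{1..n}. l i * \<alpha> i) + (\<Sum>i\<in>{1..n}. m i * \<beta> i) = (\<Sum>i\<in>{1..n}. l' i * \<alpha> i) + (\<Sum>i\<in>{1..n}. m' i * \<beta> i)"
    have e1: "sum c B' = sum c B" using key h sB Al'[THEN conjunct1] Cm'[THEN conjunct1] by linarith
    have e2: "(\<Sum>i\<in>{1..n}. l' i * ?g i) = ?g 1" using key h sB Al'[THEN conjunct1] Cm'[THEN conjunct1] by linarith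
    have e3: "(\<Sum>i\<in>{1..n}. m' i * ?k i) = ?k 1" using key h sB Al'[THEN conjunct1] Cm'[THEN conjunct1] by linarith
    show "B' = B" using e1 opt B' by force
    show "\<forall>i\<in>{1..n}. l' i \<noteq> 0 \<longrightarrow> i \<in> insert 1 X" using e2 Al'[THEN conjunct2] giff by blast
    show "\<forall>i\<in>{1..n}. m' i \<noteq> 0 \<longrightarrow> i \<in> insert 1 Y" using e3 Cm'[THEN conjunct2] kiff by blast
  qed
qed

lemma prob_full_of: "prob n S w \<Longrightarrow> prob n {1..n} w"
  unfolding prob_def by auto

lemma loc_from:
  assumes mb: "matroid_bases n Bs" and B: "B \<in> Bs"
    and opt: "\<forall>B'\<in>Bs. B' \<noteq> B \<longrightarrow> sum c B' < sum c B"
    and f: "f \<in> B" and e: "e \<notin> B" and ins: "insert e (B - {f}) \<in> Bs"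
  shows "c e < (c f :: real)"
proof -
  have fB: "finite B" using bases_fin[OF mb B] .
  have ne: "insert e (B - {f}) \<noteq> B" using e by auto
  have "sum c (insert e (B - {f})) = c e + sum c (B - {f})" using fB e by simp
  also have "\<dots> = c e + (sum c B - c f)" using fB f by (simp add: sum_diff1)
  finally have "sum c (insert e (B - {f})) = c e + (sum c B - c f)" .
  moreover have "sum c (insert e (B - {f})) < sum c B" using bspec[OF opt ins] ne by simp
  ultimately show ?thesis by linarith
qed

theorem mainTheorem9:
  fixes n u t :: nat and Bs :: "nat set set" and \<alpha> \<beta> :: "nat \<Rightarrow> real"
    and X1 Y1 X2 Y2 X3 Y3 B1 B2 :: "nat set" and p :: "nat \<Rightarrow> real"
  assumes "1 \<le> n"
    and "matroid_bases n Bs"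
    and "0 < \<alpha> 1" "strict_mono_on {1..n} \<alpha>"
    and "0 < \<beta> 1" "strict_mono_on {1..n} \<beta>"
    and "0 < u" "0 < t"
    and "X1 \<union> Y1 = {2..n}" "X1 \<inter> Y1 = {}"
    and "X2 \<union> Y2 = {2..n}" "X2 \<inter> Y2 = {}"
    and "X3 \<union> Y3 = {2..n}" "X3 \<inter> Y3 = {}"
    and "(X1, Y1) \<noteq> (X2, Y2)"
    and "is_T n Bs \<alpha> \<beta> u t X1 Y1 B1"
    and "is_T n Bs \<alpha> \<beta> u t X2 Y2 B2"
    and "p \<in> Tface u t X1 Y1 B1" "p \<in> Tface u t X2 Y2 B2"
    and "X1 \<inter> X2 \<subseteq> X3" "Y1 \<inter> Y2 \<subseteq> Y3"
  shows "B1 = B2 \<and> is_T n Bs \<alpha> \<beta> u t X3 Y3 B1 \<and> p \<in> Tface u t X3 Y3 B1"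
proof -
  note n1 = assms(1) and mb = assms(2) and am = assms(4) and bm = assms(6) and u = assms(7) and t = assms(8)
  note P1 = assms(9,10) and P2 = assms(11,12) and P3 = assms(13,14)
  note s1 = assms(20) and s2 = assms(21)
  have X1s: "X1 \<subseteq> {2..n}" and Y1s: "Y1 \<subseteq> {2..n}" using part_sub[OF P1(1)] by auto
  have X2s: "X2 \<subseteq> {2..n}" and Y2s: "Y2 \<subseteq> {2..n}" using part_sub[OF P2(1)] by auto
  have X3s: "X3 \<subseteq> {2..n}" and Y3s: "Y3 \<subseteq> {2..n}" using part_sub[OF P3(1)] by auto
  have iX1: "insert 1 X1 \<subseteq> {1..n}" using ins_sub[OF X1s n1] .
  have iY1: "insert 1 Y1 \<subseteq> {1..n}" using ins_sub[OF Y1s n1] .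
  have iX2: "insert 1 X2 \<subseteq> {1..n}" using ins_sub[OF X2s n1] .
  have iY2: "insert 1 Y2 \<subseteq> {1..n}" using ins_sub[OF Y2s n1] .
  have iX3: "insert 1 X3 \<subseteq> {1..n}" using ins_sub[OF X3s n1] .
  have iY3: "insert 1 Y3 \<subseteq> {1..n}" using ins_sub[OF Y3s n1] .
  obtain c1 where B1: "B1 \<in> Bs" and SA1: "SX n \<alpha> (real u) c1 = insert 1 X1"
      and SC1: "SX n \<beta> (- real t) c1 = insert 1 Y1" and opt1: "\<forall>B'\<in>Bs. B' \<noteq> B1 \<longrightarrow> sum c1 B' < sum c1 B1"
    using isT_facts[OF n1 mb u t P1(1) assms(16)] by blast
  obtain c2 where B2: "B2 \<in> Bs" and SA2: "SX n \<alpha> (real u) c2 = insert 1 X2"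
      and SC2: "SX n \<beta> (- real t) c2 = insert 1 Y2" and opt2: "\<forall>B'\<in>Bs. B' \<noteq> B2 \<longrightarrow> sum c2 B' < sum c2 B2"
    using isT_facts[OF n1 mb u t P2(1) assms(17)] by blast
  obtain l1 m1 where r1: "prob n (insert 1 X1) l1" "prob n (insert 1 Y1) m1"
      "p = (\<lambda>j. indvec B1 j + (vS n (real u) l1 j + vS n (- real t) m1 j))"
    using Tface_obtain[OF u t iX1 iY1 assms(18)] by blast
  obtain l2 m2 where r2: "prob n (insert 1 X2) l2" "prob n (insert 1 Y2) m2"
      "p = (\<lambda>j. indvec B2 j + (vS n (real u) l2 j + vS n (- real t) m2 j))"
    using Tface_obtain[OF u t iX2 iY2 assms(19)] by blast
  have eq12: "(\<lambda>j. indvec B1 j + (vS n (real u) l1 j + vS n (- real t) m1 j)) =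
              (\<lambda>j. indvec B2 j + (vS n (real u) l2 j + vS n (- real t) m2 j))" using r1(3) r2(3) by simp
  note sd1 = side[OF mb B1 B2 SA1 SC1 opt1 r1(1,2) prob_full_of[OF r2(1)] prob_full_of[OF r2(2)] eq12]
  note sd2 = side[OF mb B2 B1 SA2 SC2 opt2 r2(1,2) prob_full_of[OF r1(1)] prob_full_of[OF r1(2)] eq12[symmetric]]
  have hh: "(\<Sum>i\<in>{1..n}. l1 i * \<alpha> i) + (\<Sum>i\<in>{1..n}. m1 i * \<beta> i) = (\<Sum>i\<in>{1..n}. l2 i * \<alpha> i) + (\<Sum>i\<in>{1..n}. m2 i * \<beta> i)"
    using sd1 sd2 by linarith
  have B21: "B2 = B1" and supl: "\<forall>i\<in>{1..n}. l2 i \<noteq> 0 \<longrightarrow> i \<in> insert 1 X1"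
      and supm: "\<forall>i\<in>{1..n}. m2 i \<noteq> 0 \<longrightarrow> i \<in> insert 1 Y1"
    using sd1 hh by auto
  have l3: "prob n (insert 1 X3) l2"
  proof -
    have "\<forall>i\<in>{1..n}. i \<notin> insert 1 X3 \<longrightarrow> l2 i = 0"
    proof (intro ballI impI)
      fix i assume i: "i \<in> {1..n}" "i \<notin> insert 1 X3"
      show "l2 i = 0"
      proof (rule ccontr)
        assume "l2 i \<noteq> 0"
        then have "i \<in> insert 1 X1" "i \<in> insert 1 X2" using supl i r2(1) unfolding prob_def by auto
        then show False using i s1 by auto
      qed
    qed
    then show ?thesis using r2(1) unfolding prob_def by auto
  qed
  have m3: "prob n (insert 1 Y3) m2"
  proof -
    have "\<forall>i\<in>{1..n}. i \<notin> insert 1 Y3 \<longrightarrow> m2 i = 0"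
    proof (intro ballI impI)
      fix i assume i: "i \<in> {1..n}" "i \<notin> insert 1 Y3"
      show "m2 i = 0"
      proof (rule ccontr)
        assume "m2 i \<noteq> 0"
        then have "i \<in> insert 1 Y1" "i \<in> insert 1 Y2" using supm i r2(2) unfolding prob_def by auto
        then show False using i s2 by auto
      qed
    qed
    then show ?thesis using r2(2) unfolding prob_def by auto
  qed
  have pT3: "p \<in> Tface u t X3 Y3 B1"
    using Tface_intro[OF u t iX3 iY3 l3 m3, of B1] r2(3) B21 by simp
  let ?c3 = "cc u t \<alpha> \<beta> X3 Y3"
  have SX3: "SX n \<alpha> (real u) ?c3 = insert 1 X3 \<and> SX n \<beta> (- real t) ?c3 = insert 1 Y3"
    by (rule SX_cc[OF n1 u t am bm P3])
  have loc: "\<forall>f\<in>B1. \<forall>e. e \<notin> B1 \<longrightarrow> insert e (B1 - {f}) \<in> Bs \<longrightarrow> ?c3 e < ?c3 f"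
  proof (intro ballI allI impI)
    fix f e assume f: "f \<in> B1" and e: "e \<notin> B1" and ins: "insert e (B1 - {f}) \<in> Bs"
    have fn: "f \<in> {1..n}" using bases_sub[OF mb B1] f by blast
    have en: "e \<in> {1..n}" using bases_sub[OF mb ins] by blast
    have "c1 e < c1 f" using loc_from[OF mb B1 opt1 f e ins] .
    moreover have "c1 e - c1 1 = cc u t \<alpha> \<beta> X1 Y1 e" by (rule c_vals[OF n1 u t P1 SA1 SC1 en])
    moreover have "c1 f - c1 1 = cc u t \<alpha> \<beta> X1 Y1 f" by (rule c_vals[OF n1 u t P1 SA1 SC1 fn])
    ultimately have lt1: "cc u t \<alpha> \<beta> X1 Y1 e < cc u t \<alpha> \<beta> X1 Y1 f" by linarith
    have opt2': "\<forall>B'\<in>Bs. B' \<noteq> B1 \<longrightarrow> sum c2 B' < sum c2 B1" using opt2 B21 by simp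
    have "c2 e < c2 f" using loc_from[OF mb B1 opt2' f e ins] .
    moreover have "c2 e - c2 1 = cc u t \<alpha> \<beta> X2 Y2 e" by (rule c_vals[OF n1 u t P2 SA2 SC2 en])
    moreover have "c2 f - c2 1 = cc u t \<alpha> \<beta> X2 Y2 f" by (rule c_vals[OF n1 u t P2 SA2 SC2 fn])
    ultimately have lt2: "cc u t \<alpha> \<beta> X2 Y2 e < cc u t \<alpha> \<beta> X2 Y2 f" by linarith
    show "?c3 e < ?c3 f" by (rule comb[OF u t am bm P1 P2 P3 s1 s2 en fn lt1 lt2])
  qed
  have opt3: "\<forall>B'\<in>Bs. B' \<noteq> B1 \<longrightarrow> sum ?c3 B' < sum ?c3 B1"
    using loc_glob[OF mb B1 loc] by blast
  have opt3': "\<forall>B'\<in>Bs. sum ?c3 B' \<le> sum ?c3 B1"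
  proof
    fix B' assume "B' \<in> Bs" then show "sum ?c3 B' \<le> sum ?c3 B1" using opt3 by (cases "B' = B1") auto
  qed
  have G3: "cellG n Bs ?c3 = {indvec B1}" by (rule cellG_unique[OF mb B1 opt3])
  have F3: "cellF n \<alpha> u ?c3 = sdelta (real u) (insert 1 X3)" using cellF_eq[OF n1 u] SX3 by simp
  have H3: "cellH n \<beta> t ?c3 = sdelta (- real t) (insert 1 Y3)" using cellH_eq[OF n1 t] SX3 by simp
  have cover: "\<forall>i\<in>{1..n}. i \<in> SX n \<alpha> (real u) ?c3 \<or> i \<in> SX n \<beta> (- real t) ?c3"
  proof
    fix i assume i: "i \<in> {1..n}"
    show "i \<in> SX n \<alpha> (real u) ?c3 \<or> i \<in> SX n \<beta> (- real t) ?c3"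
    proof (cases "i = 1")
      case False then have "i \<in> {2..n}" using i by auto
      then have "i \<in> X3 \<or> i \<in> Y3" using P3(1) by blast
      then show ?thesis using SX3 by auto
    qed (use SX3 in auto)
  qed
  have oneA: "1 \<in> SX n \<alpha> (real u) ?c3" and oneC: "1 \<in> SX n \<beta> (- real t) ?c3" using SX3 by auto
  have mx: "\<forall>c'. cell n Bs \<alpha> \<beta> u t ?c3 \<subseteq> cell n Bs \<alpha> \<beta> u t c' \<longrightarrow> cell n Bs \<alpha> \<beta> u t c' = cell n Bs \<alpha> \<beta> u t ?c3"
    by (rule cell_max[OF n1 mb B1 u t cover oneA oneC opt3'])
  have vv: "\<exists>v\<in>matroid_polytope Bs. cellG n Bs ?c3 = {v}" using G3 indvec_poly[OF mb B1] by blast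
  have tdf: "top_degree_face n Bs \<alpha> \<beta> u t (sdelta (real u) (insert 1 X3)) {indvec B1} (sdelta (- real t) (insert 1 Y3))"
    unfolding top_degree_face_def
    apply (rule exI[of _ ?c3])
    using F3 G3 H3 mx vv by simp
  have isT3: "is_T n Bs \<alpha> \<beta> u t X3 Y3 B1" unfolding is_T_def using B1 tdf by simp
  show ?thesis using B21 isT3 pT3 by simp
qed

end
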